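(* For some constant $c>0$, there exists an infinite family $\{B_m\}$ of graphs satisfying: (1) $B_m$ is a base graph with $m$ vertices and $O(m)$ edges; (2) $B_m$ has width $\phi_m=\Theta(\log m)$; (3) $B_m$ has at least $3m$ edges; (4) $B_m$ has girth $\Theta(\log m)$.
   Context: A base graph of width $\phi$ is an unweighted connected graph with two distinguished vertices $s$ (source) and $t$ (sink) whose edge set can be decomposed into edge-disjoint $(s,t)$-paths, each of which is a shortest $(s,t)$-path in the graph and has exactly $\phi$ edges. *)

theory Defs
  imports "HOL-Analysis.Analysis" "HOL-Library.Extended_Nat"
begin

definition simple_graph :: "'a set \<Rightarrow> 'a set set \<Rightarrow> bool" where
  "simple_graph V E \<longleftrightarrow> finite V \<and>
     (\<forall>e\<in>E. \<exists>u v. u \<in> V \<and> v \<in> V \<and> u \<noteq> v \<and> e = {u, v})"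

text \<open>A walk is a nonempty list of vertices with consecutive vertices adjacent;
  its number of edges is length minus one.\<close>

definition is_walk :: "'a set \<Rightarrow> 'a set set \<Rightarrow> 'a list \<Rightarrow> bool" where
  "is_walk V E p \<longleftrightarrow> p \<noteq> [] \<and> set p \<subseteq> V \<and>
     (\<forall>i. Suc i < length p \<longrightarrow> {p ! i, p ! Suc i} \<in> E)"

definition walk_edges :: "'a list \<Rightarrow> 'a set set" where
  "walk_edges p = {{p ! i, p ! Suc i} | i. Suc i < length p}"

definition connected_graph :: "'a set \<Rightarrow> 'a set set \<Rightarrow> bool" where
  "connected_graph V E \<longleftrightarrow> V \<noteq> {} \<and>
     (\<forall>u\<in>V. \<forall>v\<in>V. \<exists>p. is_walk V E p \<and> hd p = u \<and> last p = v)"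

definition graph_dist :: "'a set \<Rightarrow> 'a set set \<Rightarrow> 'a \<Rightarrow> 'a \<Rightarrow> nat" where
  "graph_dist V E u v = (LEAST k. \<exists>p. is_walk V E p \<and> hd p = u \<and> last p = v \<and> length p = Suc k)"

definition is_path :: "'a set \<Rightarrow> 'a set set \<Rightarrow> 'a \<Rightarrow> 'a \<Rightarrow> 'a list \<Rightarrow> bool" where
  "is_path V E s t p \<longleftrightarrow> is_walk V E p \<and> distinct p \<and> hd p = s \<and> last p = t"

definition base_graph :: "'a set \<Rightarrow> 'a set set \<Rightarrow> 'a \<Rightarrow> 'a \<Rightarrow> nat \<Rightarrow> bool" where
  "base_graph V E s t phi \<longleftrightarrow>
     simple_graph V E \<and> connected_graph V E \<and> s \<in> V \<and> t \<in> V \<and>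
     (\<exists>P. (\<forall>p\<in>P. is_path V E s t p \<and> length p = Suc phi \<and> graph_dist V E s t = phi) \<and>
          (\<forall>p\<in>P. \<forall>q\<in>P. p \<noteq> q \<longrightarrow> walk_edges p \<inter> walk_edges q = {}) \<and>
          (\<Union>p\<in>P. walk_edges p) = E)"

definition is_cycle :: "'a set \<Rightarrow> 'a set set \<Rightarrow> 'a list \<Rightarrow> bool" where
  "is_cycle V E c \<longleftrightarrow> length c \<ge> 3 \<and> distinct c \<and> is_walk V E c \<and> {last c, hd c} \<in> E"

text \<open>Girth: length of a shortest cycle (infinity if acyclic).\<close>

definition girth :: "'a set \<Rightarrow> 'a set set \<Rightarrow> enat" where
  "girth V E = (INF c \<in> {c. is_cycle V E c}. enat (length c))"

end

theory Submission
  imports Defs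
begin

lemma walk_rev:
  assumes "is_walk V E p" shows "is_walk V E (rev p)"
proof -
  have "{rev p ! i, rev p ! Suc i} \<in> E" if "Suc i < length p" for i
  proof -
    have "rev p ! i = p ! (length p - Suc i)" "rev p ! Suc i = p ! (length p - Suc (Suc i))"
      using that by (auto simp: rev_nth)
    moreover have "{p ! (length p - Suc (Suc i)), p ! Suc (length p - Suc (Suc i))} \<in> E"
      using assms that unfolding is_walk_def by auto
    moreover have "Suc (length p - Suc (Suc i)) = length p - Suc i" using that by auto
    ultimately show ?thesis by (simp add: insert_commute)
  qed
  thus ?thesis using assms unfolding is_walk_def by auto
qed

lemma walk_take:
  assumes "is_walk V E p" "0 < j" shows "is_walk V E (take j p)"
  using assms unfolding is_walk_def
  by (auto dest: in_set_takeD)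

lemma walk_single: "is_walk V E [a] \<longleftrightarrow> a \<in> V"
  unfolding is_walk_def by auto

lemma walk_Cons2: "is_walk V E (a # b # r) \<longleftrightarrow> a \<in> V \<and> {a, b} \<in> E \<and> is_walk V E (b # r)"
proof
  assume h: "is_walk V E (a # b # r)"
  have "{(b # r) ! i, (b # r) ! Suc i} \<in> E" if "Suc i < length (b # r)" for i
    using h that unfolding is_walk_def by (metis Suc_less_eq length_Cons nth_Cons_Suc)
  then show "a \<in> V \<and> {a, b} \<in> E \<and> is_walk V E (b # r)"
  proof (intro conjI)
    show "a \<in> V" using h unfolding is_walk_def by auto
    show "{a, b} \<in> E" using h unfolding is_walk_def by (metis length_Cons nth_Cons_0 nth_Cons_Suc zero_less_Suc Suc_less_eq)
    show "is_walk V E (b # r)" using h \<open>\<And>i. _ \<Longrightarrow> _\<close> unfolding is_walk_def by auto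
  qed
next
  assume h: "a \<in> V \<and> {a, b} \<in> E \<and> is_walk V E (b # r)"
  have "{(a # b # r) ! i, (a # b # r) ! Suc i} \<in> E" if "Suc i < length (a # b # r)" for i
  proof (cases i)
    case 0 then show ?thesis using h by simp
  next
    case (Suc i') then show ?thesis using h that unfolding is_walk_def by auto
  qed
  then show "is_walk V E (a # b # r)" using h unfolding is_walk_def by auto
qed

lemma walk_append:
  assumes "is_walk V E p" "is_walk V E q" "last p = hd q"
  shows "is_walk V E (p @ tl q)"
  using assms
proof (induction p rule: induct_list012)
  case 1 then show ?case by (simp add: is_walk_def)
next
  case (2 x) then show ?case
    by (metis append.left_neutral append_Cons is_walk_def last_ConsL list.collapse)
next
  case (3 x y zs)
  then have "is_walk V E (y # zs @ tl q)" using walk_Cons2 by (metis append_Cons last_ConsR list.discI)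
  then show ?case using 3 walk_Cons2 by (metis append_Cons)
qed

lemma cycle_len: "is_cycle V E c \<Longrightarrow> 3 \<le> length c" unfolding is_cycle_def by auto

lemma cycle_edge_mod:
  assumes "is_cycle V E c"
  shows "{c ! (j mod length c), c ! (Suc j mod length c)} \<in> E"
proof -
  let ?L = "length c"
  have L: "3 \<le> ?L" using assms unfolding is_cycle_def by auto
  have Lp: "0 < ?L" using L by linarith
  have jl: "j mod ?L < ?L" using Lp by (rule mod_less_divisor)
  show ?thesis
  proof (cases "Suc (j mod ?L) < ?L")
    case True
    then have "Suc j mod ?L = Suc (j mod ?L)" by (simp add: mod_Suc)
    then show ?thesis using True assms unfolding is_cycle_def is_walk_def by auto
  next
    case False
    then have a: "j mod ?L = ?L - 1" using jl by auto
    then have "Suc j mod ?L = 0" using L by (simp add: mod_Suc)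
    moreover have "c \<noteq> []" using L by auto
    then have "c ! (?L - 1) = last c" "c ! 0 = hd c"
      by (auto simp: last_conv_nth hd_conv_nth)
    ultimately show ?thesis using a assms unfolding is_cycle_def by auto
  qed
qed

lemma cycle_intro:
  assumes "3 \<le> length c" "distinct c" "set c \<subseteq> V"
    "\<And>j. j < length c \<Longrightarrow> {c ! j, c ! (Suc j mod length c)} \<in> E"
  shows "is_cycle V E c"
proof -
  have "{c ! i, c ! Suc i} \<in> E" if "Suc i < length c" for i
    using assms(4)[of i] that by auto
  moreover have "{last c, hd c} \<in> E"
  proof -
    have "c \<noteq> []" using assms(1) by auto
    then have "last c = c ! (length c - 1)" "hd c = c ! 0" by (auto simp: last_conv_nth hd_conv_nth)
    moreover have "Suc (length c - 1) = length c" using assms(1) by simp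
    then have "Suc (length c - 1) mod length c = 0" by simp
    ultimately show ?thesis using assms(4)[of "length c - 1"] assms(1) by auto
  qed
  ultimately show ?thesis using assms unfolding is_cycle_def is_walk_def by auto
qed

lemma cycle_nbrs:
  assumes "is_cycle V E c" "v \<in> set c"
  shows "\<exists>u1 u2. u1 \<noteq> u2 \<and> u1 \<in> set c \<and> u2 \<in> set c \<and> {v, u1} \<in> E \<and> {v, u2} \<in> E"
proof -
  let ?L = "length c"
  have L: "3 \<le> ?L" and dc: "distinct c" using assms unfolding is_cycle_def by auto
  obtain j where j: "j < ?L" "c ! j = v" using assms(2) by (metis in_set_conv_nth)
  define j1 where "j1 = Suc j mod ?L"
  define j2 where "j2 = (j + ?L - 1) mod ?L"
  have e1: "{v, c ! j1} \<in> E" using cycle_edge_mod[OF assms(1), of j] j unfolding j1_def by auto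
  have "Suc (j + ?L - 1) = j + ?L" using L by auto
  then have "Suc (j + ?L - 1) mod ?L = j" using j by simp
  then have e2: "{v, c ! j2} \<in> E" using cycle_edge_mod[OF assms(1), of "j + ?L - 1"] j
    unfolding j2_def by (auto simp: insert_commute)
  have Lp: "0 < ?L" using L by linarith
  have j1l: "j1 < ?L" and j2l: "j2 < ?L" unfolding j1_def j2_def using mod_less_divisor[OF Lp] by auto
  have j1v: "j1 = (if j = ?L - 1 then 0 else Suc j)" unfolding j1_def using j L
    by (auto simp: mod_Suc)
  have j2v: "j2 = (if j = 0 then ?L - 1 else j - 1)" unfolding j2_def
  proof (cases "j = 0")
    case True then show "(j + ?L - 1) mod ?L = (if j = 0 then ?L - 1 else j - 1)" using Lp by simp
  next
    case False
    then have "j + ?L - 1 = (j - 1) + ?L" by simp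
    moreover have "(j - 1) mod ?L = j - 1" using j by simp
    ultimately show "(j + ?L - 1) mod ?L = (if j = 0 then ?L - 1 else j - 1)" using False
      by (metis mod_add_self2)
  qed
  have "j1 \<noteq> j2" using j1v j2v L j by auto
  then have "c ! j1 \<noteq> c ! j2" using dc j1l j2l by (simp add: nth_eq_iff_index_eq)
  then show ?thesis using e1 e2 j1l j2l by (meson nth_mem)
qed

lemma extract_cycle:
  fixes w :: "nat \<Rightarrow> 'a"
  assumes E2: "\<And>e. e \<in> E \<Longrightarrow> \<exists>u v. u \<noteq> v \<and> e = {u, v}"
    and L1: "1 \<le> L" and cl: "w 0 = w L"
    and wV: "\<And>j. j \<le> L \<Longrightarrow> w j \<in> V"
    and we: "\<And>j. j < L \<Longrightarrow> {w j, w (Suc j)} \<in> E"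
    and nb: "\<And>j. 0 < j \<Longrightarrow> j < L \<Longrightarrow> w (j - 1) \<noteq> w (Suc j)"
  shows "\<exists>c. is_cycle V E c \<and> length c \<le> L"
proof -
  define P where "P = (\<lambda>d. 0 < d \<and> (\<exists>a. a + d \<le> L \<and> w a = w (a + d)))"
  have PL: "P L" unfolding P_def using L1 cl by auto
  define d where "d = (LEAST d. P d)"
  have Pd: "P d" unfolding d_def using PL by (rule LeastI)
  have dL: "d \<le> L" unfolding d_def using PL by (rule Least_le)
  have dmin: "\<And>d'. d' < d \<Longrightarrow> \<not> P d'" unfolding d_def by (rule not_less_Least)
  obtain a where a: "a + d \<le> L" "w a = w (a + d)" and d0: "0 < d" using Pd unfolding P_def by auto
  define c where "c = map (\<lambda>t. w (a + t)) [0..<d]"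
  have lc: "length c = d" unfolding c_def by simp
  have cn: "\<And>t. t < d \<Longrightarrow> c ! t = w (a + t)" unfolding c_def by simp
  have dc: "distinct c"
  proof -
    have "w (a + t1) \<noteq> w (a + t2)" if "t1 < t2" "t2 < d" for t1 t2
    proof
      assume eq: "w (a + t1) = w (a + t2)"
      have "P (t2 - t1)" unfolding P_def using that a eq
        by (intro conjI exI[of _ "a + t1"]) auto
      then show False using dmin[of "t2 - t1"] that by auto
    qed
    then show ?thesis unfolding distinct_conv_nth lc using cn
      by (metis linorder_neqE_nat)
  qed
  have d1: "d \<noteq> 1"
  proof
    assume "d = 1"
    then have "{w a, w (Suc a)} \<in> E" "w a = w (Suc a)" using we[of a] a by auto
    then show False using E2 by (metis doubleton_eq_iff insert_absorb2)
  qed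
  have d2: "d \<noteq> 2"
  proof
    assume "d = 2"
    then show False using nb[of "Suc a"] a by (auto simp: numeral_2_eq_2)
  qed
  have d3: "3 \<le> d" using d0 d1 d2 by linarith
  show ?thesis
  proof (intro exI conjI)
    show "length c \<le> L" using lc dL by simp
    show "is_cycle V E c"
    proof (rule cycle_intro)
      show "3 \<le> length c" using lc d3 by simp
      show "distinct c" by (rule dc)
      show "set c \<subseteq> V" unfolding c_def using wV a by auto
      fix j assume j: "j < length c"
      show "{c ! j, c ! (Suc j mod length c)} \<in> E"
      proof (cases "Suc j < d")
        case True
        then show ?thesis using cn j lc we[of "a + j"] a by auto
      next
        case False
        then have "Suc j = d" using j lc by simp
        then have "Suc j mod length c = 0" using lc by simp
        moreover have "{w (a + j), w (Suc (a + j))} \<in> E" using we[of "a + j"] a \<open>Suc j = d\<close> by auto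
        moreover have "w (Suc (a + j)) = w a" using a \<open>Suc j = d\<close> by (metis add_Suc_right)
        ultimately show ?thesis using cn j lc d0 by auto
      qed
    qed
  qed
qed

lemma girth_attained:
  assumes "is_cycle V E c1"
  shows "\<exists>c0. is_cycle V E c0 \<and> girth V E = enat (length c0) \<and>
     (\<forall>c. is_cycle V E c \<longrightarrow> length c0 \<le> length c)"
proof -
  let ?A = "(\<lambda>c. enat (length c)) ` {c. is_cycle V E c}"
  have ne: "?A \<noteq> {}" using assms by auto
  have "Inf ?A \<in> ?A" unfolding Inf_enat_def using ne by (auto intro: LeastI)
  then obtain c0 where c0: "is_cycle V E c0" "Inf ?A = enat (length c0)" by auto
  have "\<forall>c. is_cycle V E c \<longrightarrow> length c0 \<le> length c"
  proof (intro allI impI)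
    fix c assume "is_cycle V E c"
    then have "Inf ?A \<le> enat (length c)" by (auto intro: Inf_lower)
    then show "length c0 \<le> length c" using c0 by simp
  qed
  then show ?thesis using c0 unfolding girth_def by auto
qed

definition emap :: "('a \<Rightarrow> 'b) \<Rightarrow> 'a set set \<Rightarrow> 'b set set" where
  "emap f E = (\<lambda>e. f ` e) ` E"

lemma walk_map:
  assumes "is_walk V E p" shows "is_walk (f ` V) (emap f E) (map f p)"
proof -
  have "{map f p ! i, map f p ! Suc i} \<in> emap f E" if "Suc i < length p" for i
  proof -
    have "{p ! i, p ! Suc i} \<in> E" using assms that unfolding is_walk_def by auto
    moreover have "{map f p ! i, map f p ! Suc i} = f ` {p ! i, p ! Suc i}" using that by auto
    ultimately show ?thesis unfolding emap_def by (metis image_eqI)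
  qed
  then show ?thesis using assms unfolding is_walk_def by auto
qed

lemma cycle_map:
  assumes "inj_on f V" "is_cycle V E c" shows "is_cycle (f ` V) (emap f E) (map f c)"
proof -
  have sc: "set c \<subseteq> V" and ne: "c \<noteq> []" using assms(2) unfolding is_cycle_def is_walk_def by auto
  have "distinct (map f c)" using assms sc unfolding is_cycle_def
    by (simp add: distinct_map inj_on_subset)
  moreover have "{last (map f c), hd (map f c)} \<in> emap f E"
  proof -
    have "{last c, hd c} \<in> E" using assms(2) unfolding is_cycle_def by auto
    moreover have "{last (map f c), hd (map f c)} = f ` {last c, hd c}" using ne by (auto simp: last_map hd_map)
    ultimately show ?thesis unfolding emap_def by (metis image_eqI)
  qed
  ultimately show ?thesis using assms(2) walk_map[of V E c f] unfolding is_cycle_def by auto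
qed

lemma walk_edges_map: "walk_edges (map f p) = emap f (walk_edges p)"
proof -
  have "walk_edges (map f p) = {f ` {p ! i, p ! Suc i} | i. Suc i < length p}"
    unfolding walk_edges_def by force
  also have "\<dots> = (\<lambda>e. f ` e) ` {{p ! i, p ! Suc i} | i. Suc i < length p}" by blast
  finally show ?thesis unfolding walk_edges_def emap_def .
qed

lemma emap_inv:
  assumes "inj_on f V" "E \<subseteq> Pow V"
  shows "emap (inv_into V f) (emap f E) = E"
proof -
  have "(\<lambda>e. inv_into V f ` e) ` (\<lambda>e. f ` e) ` E = (\<lambda>e. inv_into V f ` f ` e) ` E" by auto
  also have "\<dots> = (\<lambda>e. e) ` E"
  proof (rule image_cong[OF refl])
    fix e assume "e \<in> E"
    then have "e \<subseteq> V" using assms(2) by auto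
    then show "inv_into V f ` f ` e = e" using assms(1) by simp
  qed
  finally show ?thesis unfolding emap_def by simp
qed

lemma map_inv:
  assumes "inj_on f V" "set p \<subseteq> V" shows "map (inv_into V f) (map f p) = p"
  using assms by (induction p) auto

lemma walk_map_back:
  assumes "inj_on f V" "E \<subseteq> Pow V" "is_walk (f ` V) (emap f E) q"
  shows "\<exists>p. q = map f p \<and> is_walk V E p"
proof -
  let ?g = "inv_into V f"
  have "is_walk (?g ` f ` V) (emap ?g (emap f E)) (map ?g q)" by (rule walk_map[OF assms(3)])
  then have w: "is_walk V E (map ?g q)" using assms by (simp add: emap_inv)
  have "set q \<subseteq> f ` V" using assms(3) unfolding is_walk_def by auto
  then have "map f (map ?g q) = q" by (induction q) (auto simp: f_inv_into_f)
  then show ?thesis using w by metis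
qed

lemma cycle_map_back:
  assumes "inj_on f V" "E \<subseteq> Pow V" "is_cycle (f ` V) (emap f E) q"
  shows "\<exists>p. q = map f p \<and> is_cycle V E p"
proof -
  let ?g = "inv_into V f"
  have ig: "inj_on ?g (f ` V)" by (rule inj_on_inv_into) simp
  have "is_cycle (?g ` f ` V) (emap ?g (emap f E)) (map ?g q)" by (rule cycle_map[OF ig assms(3)])
  then have w: "is_cycle V E (map ?g q)" using assms by (simp add: emap_inv)
  have "set q \<subseteq> f ` V" using assms(3) unfolding is_cycle_def is_walk_def by auto
  then have "map f (map ?g q) = q" by (induction q) (auto simp: f_inv_into_f)
  then show ?thesis using w by metis
qed

lemma girth_map:
  assumes "inj_on f V" "E \<subseteq> Pow V"
  shows "girth (f ` V) (emap f E) = girth V E"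
proof -
  have "(\<lambda>c. enat (length c)) ` {c. is_cycle (f ` V) (emap f E) c} =
        (\<lambda>c. enat (length c)) ` {c. is_cycle V E c}"
  proof (intro equalityI subsetI)
    fix x assume "x \<in> (\<lambda>c. enat (length c)) ` {c. is_cycle (f ` V) (emap f E) c}"
    then obtain q where "is_cycle (f ` V) (emap f E) q" "x = enat (length q)" by auto
    then show "x \<in> (\<lambda>c. enat (length c)) ` {c. is_cycle V E c}"
      using cycle_map_back[OF assms] by fastforce
  next
    fix x assume "x \<in> (\<lambda>c. enat (length c)) ` {c. is_cycle V E c}"
    then obtain q where "is_cycle V E q" "x = enat (length q)" by auto
    then show "x \<in> (\<lambda>c. enat (length c)) ` {c. is_cycle (f ` V) (emap f E) c}"
      using cycle_map[OF assms(1)] by (metis (mono_tags, lifting) image_eqI length_map mem_Collect_eq)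
  qed
  then show ?thesis unfolding girth_def by simp
qed

lemma dist_map:
  assumes "inj_on f V" "E \<subseteq> Pow V" "s \<in> V" "t \<in> V"
  shows "graph_dist (f ` V) (emap f E) (f s) (f t) = graph_dist V E s t"
proof -
  have "(\<exists>p. is_walk (f ` V) (emap f E) p \<and> hd p = f s \<and> last p = f t \<and> length p = Suc k) \<longleftrightarrow>
        (\<exists>p. is_walk V E p \<and> hd p = s \<and> last p = t \<and> length p = Suc k)" for k
  proof
    assume "\<exists>p. is_walk (f ` V) (emap f E) p \<and> hd p = f s \<and> last p = f t \<and> length p = Suc k"
    then obtain q where q: "is_walk (f ` V) (emap f E) q" "hd q = f s" "last q = f t" "length q = Suc k" by auto
    obtain p where p: "q = map f p" "is_walk V E p" using walk_map_back[OF assms(1,2) q(1)] by auto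
    have ne: "p \<noteq> []" using p(2) unfolding is_walk_def by auto
    have "hd p \<in> V" "last p \<in> V" using p(2) ne unfolding is_walk_def by auto
    moreover have "f (hd p) = f s" "f (last p) = f t" using q p ne by (auto simp: hd_map last_map)
    ultimately have "hd p = s" "last p = t" using assms by (auto dest: inj_onD)
    then show "\<exists>p. is_walk V E p \<and> hd p = s \<and> last p = t \<and> length p = Suc k" using p q by auto
  next
    assume "\<exists>p. is_walk V E p \<and> hd p = s \<and> last p = t \<and> length p = Suc k"
    then obtain p where p: "is_walk V E p" "hd p = s" "last p = t" "length p = Suc k" by auto
    have ne: "p \<noteq> []" using p(1) unfolding is_walk_def by auto
    show "\<exists>p. is_walk (f ` V) (emap f E) p \<and> hd p = f s \<and> last p = f t \<and> length p = Suc k"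
      using walk_map[OF p(1), of f] p ne by (intro exI[of _ "map f p"]) (auto simp: hd_map last_map)
  qed
  then show ?thesis unfolding graph_dist_def by simp
qed

lemma card_emap:
  assumes "inj_on f V" "E \<subseteq> Pow V" shows "card (emap f E) = card E"
  unfolding emap_def using assms by (intro card_image) (meson inj_on_image_Pow inj_on_subset)

lemma simple_graph_Pow: "simple_graph V E \<Longrightarrow> E \<subseteq> Pow V"
  unfolding simple_graph_def by auto

lemma base_map:
  assumes inj: "inj_on f V" and bg: "base_graph V E s t phi"
  shows "base_graph (f ` V) (emap f E) (f s) (f t) phi"
proof -
  have sg: "simple_graph V E" and cg: "connected_graph V E" and st: "s \<in> V" "t \<in> V"
    using bg unfolding base_graph_def by auto
  have EP: "E \<subseteq> Pow V" using sg by (rule simple_graph_Pow)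
  obtain P where P1: "\<forall>p\<in>P. is_path V E s t p \<and> length p = Suc phi \<and> graph_dist V E s t = phi"
    and P2: "\<forall>p\<in>P. \<forall>q\<in>P. p \<noteq> q \<longrightarrow> walk_edges p \<inter> walk_edges q = {}"
    and P3: "(\<Union>p\<in>P. walk_edges p) = E"
    using bg unfolding base_graph_def by blast
  have sg': "simple_graph (f ` V) (emap f E)"
  proof -
    have "finite (f ` V)" using sg unfolding simple_graph_def by auto
    moreover have "\<exists>u v. u \<in> f ` V \<and> v \<in> f ` V \<and> u \<noteq> v \<and> e = {u, v}" if ee: "e \<in> emap f E" for e
    proof -
      obtain e0 where "e0 \<in> E" "e = f ` e0" using ee by (auto simp: emap_def)
      then obtain u v where "u \<in> V" "v \<in> V" "u \<noteq> v" "e0 = {u, v}" using sg unfolding simple_graph_def by blast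
      then show ?thesis using \<open>e = f ` e0\<close> inj by (intro exI[of _ "f u"] exI[of _ "f v"]) (auto dest: inj_onD)
    qed
    ultimately show ?thesis unfolding simple_graph_def by auto
  qed
  have cg': "connected_graph (f ` V) (emap f E)"
  proof -
    have "\<exists>p. is_walk (f ` V) (emap f E) p \<and> hd p = u \<and> last p = v" if uv: "u \<in> f ` V" "v \<in> f ` V" for u v
    proof -
      obtain u0 v0 where "u0 \<in> V" "v0 \<in> V" "u = f u0" "v = f v0" using uv by auto
      then obtain p where p: "is_walk V E p" "hd p = u0" "last p = v0" using cg unfolding connected_graph_def by blast
      then have "p \<noteq> []" unfolding is_walk_def by auto
      then show ?thesis using walk_map[OF p(1), of f] p \<open>u = f u0\<close> \<open>v = f v0\<close>
        by (intro exI[of _ "map f p"]) (auto simp: hd_map last_map)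
    qed
    then show ?thesis using cg unfolding connected_graph_def by auto
  qed
  have dd: "graph_dist (f ` V) (emap f E) (f s) (f t) = graph_dist V E s t"
    by (rule dist_map[OF inj EP st])
  show ?thesis unfolding base_graph_def
  proof (intro conjI exI[of _ "map f ` P"])
    show "simple_graph (f ` V) (emap f E)" by (rule sg')
    show "connected_graph (f ` V) (emap f E)" by (rule cg')
    show "f s \<in> f ` V" "f t \<in> f ` V" using st by auto
    show "\<forall>p\<in>map f ` P. is_path (f ` V) (emap f E) (f s) (f t) p \<and> length p = Suc phi \<and>
        graph_dist (f ` V) (emap f E) (f s) (f t) = phi"
    proof
      fix q assume "q \<in> map f ` P"
      then obtain p where p: "p \<in> P" "q = map f p" by auto
      then have pp: "is_path V E s t p" "length p = Suc phi" "graph_dist V E s t = phi" using P1 by auto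
      have sp: "set p \<subseteq> V" and ne: "p \<noteq> []" using pp(1) unfolding is_path_def is_walk_def by auto
      have "is_path (f ` V) (emap f E) (f s) (f t) q"
        unfolding is_path_def p(2) using pp(1) walk_map[of V E p f] inj sp ne
        by (auto simp: is_path_def hd_map last_map distinct_map inj_on_subset)
      then show "is_path (f ` V) (emap f E) (f s) (f t) q \<and> length q = Suc phi \<and>
        graph_dist (f ` V) (emap f E) (f s) (f t) = phi" using pp p dd by simp
    qed
    show "\<forall>p\<in>map f ` P. \<forall>q\<in>map f ` P. p \<noteq> q \<longrightarrow> walk_edges p \<inter> walk_edges q = {}"
    proof (intro ballI impI)
      fix p' q' assume "p' \<in> map f ` P" "q' \<in> map f ` P" "p' \<noteq> q'"
      then obtain p q where pq: "p \<in> P" "q \<in> P" "p' = map f p" "q' = map f q" "p \<noteq> q" by auto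
      have d: "walk_edges p \<inter> walk_edges q = {}" using P2 pq by auto
      have "walk_edges p \<subseteq> E" "walk_edges q \<subseteq> E" using P3 pq by auto
      then have "walk_edges p \<subseteq> Pow V" "walk_edges q \<subseteq> Pow V" using EP by auto
      moreover have "inj_on (\<lambda>e. f ` e) (Pow V)" using inj by (rule inj_on_image_Pow)
      ultimately have "(\<lambda>e. f ` e) ` walk_edges p \<inter> (\<lambda>e. f ` e) ` walk_edges q = {}"
        using d by (simp add: inj_on_image_Int[symmetric])
      then show "walk_edges p' \<inter> walk_edges q' = {}" unfolding pq walk_edges_map emap_def .
    qed
    have "(\<Union>p\<in>map f ` P. walk_edges p) = (\<Union>p\<in>P. walk_edges (map f p))" by simp
    also have "\<dots> = (\<Union>p\<in>P. (\<lambda>e. f ` e) ` walk_edges p)" unfolding walk_edges_map emap_def by simp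
    also have "\<dots> = (\<lambda>e. f ` e) ` (\<Union>p\<in>P. walk_edges p)" by (simp add: image_UN)
    finally show "(\<Union>p\<in>map f ` P. walk_edges p) = emap f E" using P3 unfolding emap_def by simp
  qed
qed


lemma mod_add_neq: fixes j s L :: nat assumes "0 < s" "s < L" shows "(j + s) mod L \<noteq> j mod L"
proof
  assume h: "(j + s) mod L = j mod L"
  then have "L dvd s" by (metis mod_add_cong mod_add_self2 add.commute mod_eq_dvd_iff_nat le_add1 add_diff_cancel_left')
  then show False using assms by (simp add: nat_dvd_not_less)
qed

lemma cycle_new_edge:
  assumes c: "is_cycle V (insert {x, y} E) c" and nc: "\<not> is_cycle V E c"
  shows "\<exists>w. is_walk V E w \<and> hd w = x \<and> last w = y \<and> length w = length c"
proof -
  let ?L = "length c"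
  define F where "F = (\<lambda>j. c ! (j mod ?L))"
  have L3: "3 \<le> ?L" and dc: "distinct c" and sc: "set c \<subseteq> V"
    using c unfolding is_cycle_def is_walk_def by auto
  have Lp: "0 < ?L" using L3 by linarith
  have Finj: "F u = F v \<longleftrightarrow> u mod ?L = v mod ?L" for u v
    unfolding F_def using dc Lp by (simp add: nth_eq_iff_index_eq)
  have Fe: "{F u, F (Suc u)} \<in> insert {x, y} E" for u
    unfolding F_def by (rule cycle_edge_mod[OF c])
  have FV: "F u \<in> V" for u unfolding F_def using sc Lp by auto
  obtain j where j: "j < ?L" "{c ! j, c ! (Suc j mod ?L)} \<notin> E"
  proof -
    have "\<not> (\<forall>j<?L. {c ! j, c ! (Suc j mod ?L)} \<in> E)"
      using nc cycle_intro[of c V E] L3 dc sc by blast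
    then show ?thesis using that by blast
  qed
  have Fj: "{F j, F (Suc j)} = {x, y}"
    using j Fe[of j] unfolding F_def by auto
  define w1 where "w1 = map (\<lambda>t. F (j + 1 + t)) [0..<?L]"
  have lw1: "length w1 = ?L" unfolding w1_def by simp
  have hw1: "hd w1 = F (Suc j)" unfolding w1_def using Lp by (simp add: hd_map)
  have lastw1: "last w1 = F j"
  proof -
    have "last w1 = F (j + 1 + (?L - 1))" unfolding w1_def using Lp by (simp add: last_map)
    also have "j + 1 + (?L - 1) = j + ?L" using Lp by simp
    finally show ?thesis using Finj by simp
  qed
  have ww1: "is_walk V E w1"
  proof -
    have "{w1 ! t, w1 ! Suc t} \<in> E" if t: "Suc t < length w1" for t
    proof -
      have eq: "w1 ! t = F (j + 1 + t)" "w1 ! Suc t = F (Suc (j + 1 + t))"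
        using t lw1 unfolding w1_def by auto
      have ne: "{F (j + 1 + t), F (Suc (j + 1 + t))} \<noteq> {F j, F (Suc j)}"
      proof
        assume "{F (j + 1 + t), F (Suc (j + 1 + t))} = {F j, F (Suc j)}"
        then consider "F (j + 1 + t) = F j" | "F (j + 1 + t) = F (Suc j)" "F (Suc (j + 1 + t)) = F j"
          by (metis doubleton_eq_iff)
        then show False
        proof cases
          case 1
          then have "(j + (Suc t)) mod ?L = j mod ?L" using Finj by simp
          then show False using mod_add_neq[of "Suc t" ?L j] t lw1 by simp
        next
          case 2
          then have "((Suc j) + t) mod ?L = (Suc j) mod ?L" using Finj by simp
          then have t0: "t = 0" using mod_add_neq[of t ?L "Suc j"] t lw1 by (cases t) auto
          then have "(j + 2) mod ?L = j mod ?L" using 2 Finj by simp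
          then show False using mod_add_neq[of 2 ?L j] L3 by simp
        qed
      qed
      have "{F (j + 1 + t), F (Suc (j + 1 + t))} \<in> insert {x, y} E" by (rule Fe)
      then show ?thesis using ne Fj eq by auto
    qed
    moreover have "w1 \<noteq> []" using lw1 Lp by auto
    moreover have "set w1 \<subseteq> V" unfolding w1_def using FV by auto
    ultimately show ?thesis unfolding is_walk_def by auto
  qed
  consider "F (Suc j) = x" "F j = y" | "F (Suc j) = y" "F j = x"
    using Fj by (metis doubleton_eq_iff)
  then show ?thesis
  proof cases
    case 1
    then show ?thesis using ww1 hw1 lastw1 lw1 by auto
  next
    case 2
    have "w1 \<noteq> []" using lw1 Lp by auto
    then show ?thesis using walk_rev[OF ww1] hw1 lastw1 lw1 2
      by (intro exI[of _ "rev w1"]) (auto simp: hd_rev last_rev)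
  qed
qed

definition EH :: "(nat \<times> nat \<times> nat) set \<Rightarrow> nat set set" where
  "EH A = {{x, y} | x y i. (x, y, i) \<in> A}"

definition good :: "nat \<Rightarrow> nat \<Rightarrow> nat \<Rightarrow> (nat \<times> nat \<times> nat) set \<Rightarrow> bool" where
  "good n d g A \<longleftrightarrow> A \<subseteq> {..<n} \<times> {..<n} \<times> {..<d} \<and>
     (\<forall>x y i. (x, y, i) \<in> A \<longrightarrow> x \<noteq> y) \<and>
     (\<forall>x y y' i. (x, y, i) \<in> A \<longrightarrow> (x, y', i) \<in> A \<longrightarrow> y = y') \<and>
     (\<forall>x x' y i. (x, y, i) \<in> A \<longrightarrow> (x', y, i) \<in> A \<longrightarrow> x = x') \<and>
     (\<forall>x y i x' y' i'. (x, y, i) \<in> A \<longrightarrow> (x', y', i') \<in> A \<longrightarrow> {x, y} = {x', y'} \<longrightarrow>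
        x = x' \<and> y = y' \<and> i = i') \<and>
     (\<forall>c. is_cycle {..<n} (EH A) c \<longrightarrow> g \<le> length c)"

fun nball :: "'a set set \<Rightarrow> 'a \<Rightarrow> nat \<Rightarrow> 'a set" where
  "nball E x 0 = {x}"
| "nball E x (Suc r) = nball E x r \<union> (\<Union>v\<in>nball E x r. {y. {v, y} \<in> E})"

lemma ball_mono: "r \<le> r' \<Longrightarrow> nball E x r \<subseteq> nball E x r'"
proof (induction r' )
  case 0 then show ?case by simp
next
  case (Suc r') then show ?case by (cases "r = Suc r'") auto
qed

lemma walk_in_ball:
  "is_walk V E p \<Longrightarrow> length p = Suc j \<Longrightarrow> last p \<in> nball E (hd p) j"
proof (induction j arbitrary: p)
  case 0
  then obtain a where "p = [a]" by (metis length_0_conv length_Suc_conv)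
  then show ?case by simp
next
  case (Suc j)
  define p' where "p' = butlast p"
  have ne: "p \<noteq> []" using Suc by auto
  have lp': "length p' = Suc j" using Suc unfolding p'_def by simp
  have wp': "is_walk V E p'"
  proof -
    have "{p' ! i, p' ! Suc i} \<in> E" if "Suc i < length p'" for i
      using Suc(2) that unfolding is_walk_def p'_def by (simp add: nth_butlast)
    moreover have "set p' \<subseteq> V" using Suc(2) unfolding is_walk_def p'_def by (meson in_set_butlastD subset_iff)
    ultimately show ?thesis using lp' unfolding is_walk_def by auto
  qed
  have hp': "hd p' = hd p"
  proof -
    have "p' \<noteq> []" using lp' by auto
    then have "hd p' = p' ! 0" by (simp add: hd_conv_nth)
    also have "\<dots> = p ! 0" unfolding p'_def using lp' p'_def by (simp add: nth_butlast)
    also have "\<dots> = hd p" using ne by (simp add: hd_conv_nth)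
    finally show ?thesis .
  qed
  have lastp': "last p' = p ! j"
  proof -
    have "p' \<noteq> []" using lp' by auto
    then have "last p' = p' ! j" using lp' by (simp add: last_conv_nth)
    also have "\<dots> = p ! j" unfolding p'_def using lp' p'_def by (simp add: nth_butlast)
    finally show ?thesis .
  qed
  have e: "{p ! j, p ! Suc j} \<in> E" using Suc(2,3) unfolding is_walk_def by auto
  have "last p = p ! Suc j" using Suc(3) ne by (simp add: last_conv_nth)
  then show ?case using Suc.IH[OF wp' lp'] hp' lastp' e by auto
qed

lemma EH_insert: "EH (insert (x, y, i) A) = insert {x, y} (EH A)"
  unfolding EH_def by blast

lemma good_empty: "good n d g {}"
proof -
  have "\<not> is_cycle {..<n} (EH {}) c" for c
    unfolding is_cycle_def EH_def by auto
  then show ?thesis unfolding good_def by auto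
qed

lemma nbr_fin_card:
  assumes "good n d g A"
  shows "finite {y. {v, y} \<in> EH A} \<and> card {y. {v, y} \<in> EH A} \<le> 2 * d"
proof -
  define f1 where "f1 = (\<lambda>i. THE y. (v, y, i) \<in> A)"
  define f2 where "f2 = (\<lambda>i. THE x. (x, v, i) \<in> A)"
  have fun1: "(x, y, i) \<in> A \<Longrightarrow> (x, y', i) \<in> A \<Longrightarrow> y = y'" for x y y' i
    using assms unfolding good_def by blast
  have fun2: "(x, y, i) \<in> A \<Longrightarrow> (x', y, i) \<in> A \<Longrightarrow> x = x'" for x x' y i
    using assms unfolding good_def by blast
  have Ad: "(x, y, i) \<in> A \<Longrightarrow> i < d" for x y i using assms unfolding good_def by auto
  have sub: "{y. {v, y} \<in> EH A} \<subseteq> f1 ` {..<d} \<union> f2 ` {..<d}"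
  proof
    fix y assume "y \<in> {y. {v, y} \<in> EH A}"
    then obtain a b i where ab: "{v, y} = {a, b}" "(a, b, i) \<in> A" unfolding EH_def by auto
    then consider "v = a" "y = b" | "v = b" "y = a" by (metis doubleton_eq_iff)
    then show "y \<in> f1 ` {..<d} \<union> f2 ` {..<d}"
    proof cases
      case 1
      then have "f1 i = y" unfolding f1_def using ab fun1 by (intro the_equality) auto
      then show ?thesis using Ad ab by auto
    next
      case 2
      then have "f2 i = y" unfolding f2_def using ab fun2 by (intro the_equality) auto
      then show ?thesis using Ad ab by auto
    qed
  qed
  have "card (f1 ` {..<d} \<union> f2 ` {..<d}) \<le> 2 * d"
    by (rule order_trans[OF card_Un_le]) (use card_image_le[of "{..<d}" f1] card_image_le[of "{..<d}" f2] in auto)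
  then show ?thesis using sub by (meson card_mono finite_Un finite_imageI finite_lessThan finite_subset order_trans)
qed

lemma ball_card:
  assumes "good n d g A"
  shows "finite (nball (EH A) x r) \<and> card (nball (EH A) x r) \<le> (2 * d + 1) ^ r"
proof (induction r)
  case 0 then show ?case by simp
next
  case (Suc r)
  let ?B = "nball (EH A) x r"
  have fin: "finite (\<Union>v\<in>?B. {y. {v, y} \<in> EH A})" using Suc nbr_fin_card[OF assms] by auto
  have "card (\<Union>v\<in>?B. {y. {v, y} \<in> EH A}) \<le> (\<Sum>v\<in>?B. card {y. {v, y} \<in> EH A})"
    by (rule card_UN_le) (use Suc in auto)
  also have "\<dots> \<le> (\<Sum>v\<in>?B. 2 * d)" by (rule sum_mono) (use nbr_fin_card[OF assms] in auto)
  also have "\<dots> = card ?B * (2 * d)" by simp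
  finally have "card (nball (EH A) x (Suc r)) \<le> card ?B + card ?B * (2 * d)"
    using card_Un_le[of ?B "\<Union>v\<in>?B. {y. {v, y} \<in> EH A}"] by simp
  also have "\<dots> = card ?B * (2 * d + 1)" by (simp add: algebra_simps)
  also have "\<dots> \<le> (2 * d + 1) ^ r * (2 * d + 1)" using Suc by (intro mult_right_mono) auto
  finally show ?case using fin Suc by (simp add: mult.commute)
qed

definition domi :: "(nat \<times> nat \<times> nat) set \<Rightarrow> nat \<Rightarrow> nat set" where
  "domi A i = {x. \<exists>y. (x, y, i) \<in> A}"

definition rani :: "(nat \<times> nat \<times> nat) set \<Rightarrow> nat \<Rightarrow> nat set" where
  "rani A i = {y. \<exists>x. (x, y, i) \<in> A}"

lemma good_conj: "good n d g A \<Longrightarrow> A \<subseteq> {..<n} \<times> {..<n} \<times> {..<d} \<and>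
     (\<forall>x y i. (x, y, i) \<in> A \<longrightarrow> x \<noteq> y) \<and>
     (\<forall>x y y' i. (x, y, i) \<in> A \<longrightarrow> (x, y', i) \<in> A \<longrightarrow> y = y') \<and>
     (\<forall>x x' y i. (x, y, i) \<in> A \<longrightarrow> (x', y, i) \<in> A \<longrightarrow> x = x') \<and>
     (\<forall>x y i x' y' i'. (x, y, i) \<in> A \<longrightarrow> (x', y', i') \<in> A \<longrightarrow> {x, y} = {x', y'} \<longrightarrow>
        x = x' \<and> y = y' \<and> i = i') \<and>
     (\<forall>c. is_cycle {..<n} (EH A) c \<longrightarrow> g \<le> length c)"
  unfolding good_def .

lemmas goodD1 = conjunct1[OF good_conj]
lemmas goodD2 = conjunct1[OF conjunct2[OF good_conj]]
lemmas goodD3 = conjunct1[OF conjunct2[OF conjunct2[OF good_conj]]]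
lemmas goodD4 = conjunct1[OF conjunct2[OF conjunct2[OF conjunct2[OF good_conj]]]]
lemmas goodD5 = conjunct1[OF conjunct2[OF conjunct2[OF conjunct2[OF conjunct2[OF good_conj]]]]]
lemmas goodD6 = conjunct2[OF conjunct2[OF conjunct2[OF conjunct2[OF conjunct2[OF good_conj]]]]]

lemma good_finite: "good n d g A \<Longrightarrow> finite A"
  unfolding good_def by (meson finite_SigmaI finite_lessThan finite_subset)

lemma card_domi_rani:
  assumes "good n d g A" shows "card (domi A i) = card (rani A i)"
proof -
  define Ai where "Ai = {(x, y). (x, y, i) \<in> A}"
  have fin: "finite Ai"
  proof -
    have "Ai \<subseteq> {..<n} \<times> {..<n}" using assms unfolding good_def Ai_def by auto
    then show ?thesis by (meson finite_SigmaI finite_lessThan finite_subset)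
  qed
  have "inj_on fst Ai" using assms unfolding good_def Ai_def inj_on_def by auto
  moreover have "inj_on snd Ai" using assms unfolding good_def Ai_def inj_on_def by auto
  moreover have "fst ` Ai = domi A i" unfolding Ai_def domi_def by force
  moreover have "snd ` Ai = rani A i" unfolding Ai_def rani_def by force
  ultimately show ?thesis by (metis card_image)
qed

lemma greedy:
  assumes g3: "3 \<le> g"
  shows "\<exists>A. good n d g A \<and> (\<forall>i<d. card ({..<n} - domi A i) \<le> (2 * d + 1) ^ (g - 2))"
proof -
  let ?X = "{..<n} :: nat set"
  let ?\<beta> = "(2 * d + 1) ^ (g - 2)"
  have bnd: "good n d g A \<Longrightarrow> card A \<le> card (?X \<times> ?X \<times> {..<d})" for A
    unfolding good_def by (intro card_mono) auto
  have "\<exists>A. good n d g A \<and> (\<forall>A'. good n d g A' \<longrightarrow> card A' \<le> card A)"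
    by (rule Lattices_Big.ex_has_greatest_nat[where P = "good n d g" and k = "{}" and f = card
          and b = "Suc (card (?X \<times> ?X \<times> {..<d}))"])
      (use good_empty bnd in \<open>auto simp: less_Suc_eq_le\<close>)
  then obtain A where gA: "good n d g A" and maxA: "\<And>A'. good n d g A' \<Longrightarrow> card A' \<le> card A"
    by blast
  have "card (?X - domi A i) \<le> ?\<beta>" if i: "i < d" for i
  proof (rule ccontr)
    assume big: "\<not> card (?X - domi A i) \<le> ?\<beta>"
    have domX: "domi A i \<subseteq> ?X" and ranX: "rani A i \<subseteq> ?X"
      using gA unfolding good_def domi_def rani_def by auto
    have "card (?X - rani A i) = card (?X - domi A i)"
      using card_domi_rani[OF gA, of i] domX ranX
      by (simp add: card_Diff_subset finite_subset)
    then have bigr: "card (?X - rani A i) > ?\<beta>" using big by simp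
    obtain x where x: "x \<in> ?X" "x \<notin> domi A i"
      using big by (metis Diff_iff card.empty equals0I zero_le)
    let ?B = "nball (EH A) x (g - 2)"
    have Bc: "finite ?B" "card ?B \<le> ?\<beta>" using ball_card[OF gA] by auto
    obtain y where y: "y \<in> ?X" "y \<notin> rani A i" "y \<notin> ?B"
    proof -
      have "\<not> (?X - rani A i \<subseteq> ?B)"
        using Bc bigr card_mono[OF Bc(1)] by (metis le_trans not_le)
      then show ?thesis using that by blast
    qed
    have xB: "x \<in> ?B" using ball_mono[of 0 "g - 2" "EH A" x] by auto
    then have xy: "x \<noteq> y" using y by auto
    have nbrB: "{x, z} \<in> EH A \<Longrightarrow> z \<in> ?B" for z
    proof -
      assume "{x, z} \<in> EH A"
      moreover have "Suc 0 \<le> g - 2" using g3 by simp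
      ultimately show "z \<in> ?B" using ball_mono[of 1 "g - 2" "EH A" x] by auto
    qed
    have nadj: "{x, y} \<notin> EH A" using nbrB y by blast
    define A' where "A' = insert (x, y, i) A"
    have gA': "good n d g A'"
    proof -
      have sA: "A \<subseteq> ?X \<times> ?X \<times> {..<d}" using goodD1[OF gA] .
      have dA: "\<And>a b j. (a, b, j) \<in> A \<Longrightarrow> a \<noteq> b" using goodD2[OF gA] by blast
      have g1: "A' \<subseteq> ?X \<times> ?X \<times> {..<d}" using sA x y i unfolding A'_def by auto
      have g2: "\<forall>a b j. (a, b, j) \<in> A' \<longrightarrow> a \<noteq> b" using dA xy unfolding A'_def by auto
      have fA: "\<And>a b b' j. (a, b, j) \<in> A \<Longrightarrow> (a, b', j) \<in> A \<Longrightarrow> b = b'"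
        using goodD3[OF gA] by blast
      have iA: "\<And>a a' b j. (a, b, j) \<in> A \<Longrightarrow> (a', b, j) \<in> A \<Longrightarrow> a = a'"
        using goodD4[OF gA] by blast
      have xd: "\<And>b. (x, b, i) \<notin> A" using x unfolding domi_def by blast
      have yr: "\<And>a. (a, y, i) \<notin> A" using y unfolding rani_def by blast
      have g3': "\<forall>a b b' j. (a, b, j) \<in> A' \<longrightarrow> (a, b', j) \<in> A' \<longrightarrow> b = b'"
        unfolding A'_def insert_iff using fA xd by (metis prod.inject)
      have g4: "\<forall>a a' b j. (a, b, j) \<in> A' \<longrightarrow> (a', b, j) \<in> A' \<longrightarrow> a = a'"
        unfolding A'_def insert_iff using iA yr by (metis prod.inject)
      have g5: "\<forall>a b j a' b' j'. (a, b, j) \<in> A' \<longrightarrow> (a', b', j') \<in> A' \<longrightarrow> {a, b} = {a', b'} \<longrightarrow>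
        a = a' \<and> b = b' \<and> j = j'"
      proof (intro allI impI)
        fix a b j a' b' j'
        assume h: "(a, b, j) \<in> A'" "(a', b', j') \<in> A'" "{a, b} = {a', b'}"
        have old: "\<not> ((a, b, j) = (x, y, i) \<and> (a', b', j') \<in> A)"
        proof
          assume "(a, b, j) = (x, y, i) \<and> (a', b', j') \<in> A"
          then have "{x, y} \<in> EH A" using h unfolding EH_def by auto
          then show False using nadj by simp
        qed
        have old2: "\<not> ((a', b', j') = (x, y, i) \<and> (a, b, j) \<in> A)"
        proof
          assume "(a', b', j') = (x, y, i) \<and> (a, b, j) \<in> A"
          then have "{x, y} \<in> EH A" using h unfolding EH_def by (auto simp: insert_commute)
          then show False using nadj by simp
        qed
        have uA: "\<And>a b j a' b' j'. (a, b, j) \<in> A \<Longrightarrow> (a', b', j') \<in> A \<Longrightarrow> {a, b} = {a', b'} \<Longrightarrow>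
          a = a' \<and> b = b' \<and> j = j'" using goodD5[OF gA] by blast
        consider "(a, b, j) = (x, y, i)" "(a', b', j') = (x, y, i)" | "(a, b, j) \<in> A" "(a', b', j') \<in> A"
          using h(1,2) old old2 unfolding A'_def by blast
        then show "a = a' \<and> b = b' \<and> j = j'"
        proof cases
          case 1 then show ?thesis by simp
        next
          case 2 then show ?thesis using uA h(3) by blast
        qed
      qed
      have g6: "\<forall>c. is_cycle ?X (EH A') c \<longrightarrow> g \<le> length c"
      proof (intro allI impI)
        fix c assume c: "is_cycle ?X (EH A') c"
        show "g \<le> length c"
        proof (rule ccontr)
          assume short: "\<not> g \<le> length c"
          have c': "is_cycle ?X (insert {x, y} (EH A)) c" using c unfolding A'_def EH_insert .
          have cyA: "\<And>c. is_cycle ?X (EH A) c \<Longrightarrow> g \<le> length c" using goodD6[OF gA] by blast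
          have "\<not> is_cycle ?X (EH A) c" using cyA short by blast
          then obtain w where w: "is_walk ?X (EH A) w" "hd w = x" "last w = y" "length w = length c"
            using cycle_new_edge[OF c'] by blast
          have "3 \<le> length c" using c by (rule cycle_len)
          then have "length w = Suc (length c - 1)" using w(4) by simp
          then have "last w \<in> nball (EH A) (hd w) (length c - 1)" by (rule walk_in_ball[OF w(1)])
          then have "y \<in> nball (EH A) x (length c - 1)" using w(2,3) by simp
          moreover have "length c - 1 \<le> g - 2" using short by simp
          then have "nball (EH A) x (length c - 1) \<subseteq> nball (EH A) x (g - 2)" by (rule ball_mono)
          ultimately show False using y(3) by blast
        qed
      qed
      show ?thesis unfolding good_def by (intro conjI g1 g2 g3' g4 g5 g6)
    qed
    have "(x, y, i) \<notin> A" using x unfolding domi_def by auto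
    then have "card A' = Suc (card A)" unfolding A'_def using good_finite[OF gA] by simp
    then show False using maxA[OF gA'] by simp
  qed
  then show ?thesis using gA by blast
qed


definition pi :: "(nat \<times> nat \<times> nat) set \<Rightarrow> nat \<Rightarrow> nat \<Rightarrow> nat" where
  "pi A i x = (THE y. (x, y, i) \<in> A)"

lemma pi_arc:
  assumes "good n d g A" "x \<in> domi A i" shows "(x, pi A i x, i) \<in> A"
proof -
  obtain y where y: "(x, y, i) \<in> A" using assms(2) unfolding domi_def by auto
  have "pi A i x = y" unfolding pi_def using y goodD3[OF assms(1)] by (intro the_equality) blast+
  then show ?thesis using y by simp
qed

definition Sset :: "nat \<Rightarrow> (nat \<times> nat \<times> nat) set \<Rightarrow> nat \<Rightarrow> nat \<Rightarrow> nat set" where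
  "Sset n A i K = {x \<in> {..<n}. \<forall>r<K. ((pi A i ^^ r) x, (pi A i ^^ Suc r) x, i) \<in> A}"

lemma chain_inj:
  assumes gA: "good n d g A" and x: "x \<in> Sset n A i K" and x': "x' \<in> Sset n A i K"
  shows "r \<le> K \<Longrightarrow> (pi A i ^^ r) x = (pi A i ^^ r) x' \<Longrightarrow> x = x'"
proof (induction r)
  case 0 then show ?case by simp
next
  case (Suc r)
  have a1: "((pi A i ^^ r) x, (pi A i ^^ Suc r) x, i) \<in> A" using x Suc(2) unfolding Sset_def by auto
  have a2: "((pi A i ^^ r) x', (pi A i ^^ Suc r) x', i) \<in> A" using x' Suc(2) unfolding Sset_def by auto
  have "(pi A i ^^ r) x = (pi A i ^^ r) x'" using a1 a2 Suc(3) goodD4[OF gA] by metis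
  then show ?case using Suc by simp
qed

lemma chain_X:
  assumes gA: "good n d g A" and x: "x \<in> Sset n A i K" and r: "r \<le> K"
  shows "(pi A i ^^ r) x \<in> {..<n}"
proof (cases r)
  case 0 then show ?thesis using x unfolding Sset_def by auto
next
  case (Suc r')
  then have "((pi A i ^^ r') x, (pi A i ^^ r) x, i) \<in> A" using x r unfolding Sset_def by auto
  then show ?thesis using goodD1[OF gA] by auto
qed

lemma Sset_card:
  assumes gA: "good n d g A" and dom: "card ({..<n} - domi A i) \<le> \<beta>"
  shows "card ({..<n} - Sset n A i K) \<le> K * \<beta>"
proof (induction K)
  case 0
  have "Sset n A i 0 = {..<n}" unfolding Sset_def by auto
  then show ?case by simp
next
  case (Suc K)
  let ?X = "{..<n} :: nat set"
  let ?f = "pi A i ^^ K"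
  define Z where "Z = {x \<in> Sset n A i K. ?f x \<notin> domi A i}"
  have sub: "?X - Sset n A i (Suc K) \<subseteq> (?X - Sset n A i K) \<union> Z"
  proof
    fix x assume x: "x \<in> ?X - Sset n A i (Suc K)"
    show "x \<in> (?X - Sset n A i K) \<union> Z"
    proof (rule ccontr)
      assume "x \<notin> (?X - Sset n A i K) \<union> Z"
      then have xs: "x \<in> Sset n A i K" and fd: "?f x \<in> domi A i" using x unfolding Z_def by auto
      have "(?f x, pi A i (?f x), i) \<in> A" by (rule pi_arc[OF gA fd])
      then have "x \<in> Sset n A i (Suc K)" using xs unfolding Sset_def by (auto simp: less_Suc_eq)
      then show False using x by simp
    qed
  qed
  have "inj_on ?f Z" unfolding Z_def using chain_inj[OF gA, of _ i K _ K] by (auto simp: inj_on_def)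
  moreover have "?f ` Z \<subseteq> ?X - domi A i" unfolding Z_def using chain_X[OF gA, of _ i K K] by auto
  ultimately have "card Z \<le> card (?X - domi A i)"
    by (metis card_image card_mono finite_Diff finite_lessThan)
  then have cZ: "card Z \<le> \<beta>" using dom by simp
  have "card (?X - Sset n A i (Suc K)) \<le> card ((?X - Sset n A i K) \<union> Z)"
    by (rule card_mono[OF _ sub]) (auto simp: Z_def Sset_def)
  also have "\<dots> \<le> card (?X - Sset n A i K) + card Z" by (rule card_Un_le)
  also have "\<dots> \<le> K * \<beta> + \<beta>" using Suc cZ by simp
  finally show ?case by simp
qed

datatype vtx = S | T | Bot "nat \<times> nat" nat | Top "nat \<times> nat" nat | Mid nat nat

locale constr =
  fixes n d h k :: nat and A :: "(nat \<times> nat \<times> nat) set"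
  assumes gA: "good n d (2 * h + 1) A" and h1: "1 \<le> h" and k1: "1 \<le> k"
begin

definition cp :: "nat \<times> nat \<Rightarrow> nat \<Rightarrow> nat" where
  "cp a r = (pi A (fst a) ^^ r) (snd a)"

definition Pidx :: "(nat \<times> nat) set" where
  "Pidx = {(i, x). i < d \<and> x \<in> Sset n A i (k - 1)}"

definition phi :: nat where "phi = 2 * h + k + 1"

definition pathf :: "nat \<times> nat \<Rightarrow> nat \<Rightarrow> vtx" where
  "pathf a j = (if j = 0 then S else if j \<le> h then Bot a j
     else if j \<le> h + k then Mid (cp a (j - h - 1)) (j - h)
     else if j \<le> 2 * h + k then Top a (j - h - k) else T)"

definition path :: "nat \<times> nat \<Rightarrow> vtx list" where
  "path a = map (pathf a) [0..<Suc phi]"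

definition VG :: "vtx set" where
  "VG = {pathf a j | a j. a \<in> Pidx \<and> j \<le> phi}"

definition EG :: "vtx set set" where
  "EG = {{pathf a j, pathf a (Suc j)} | a j. a \<in> Pidx \<and> j < phi}"

definition lev :: "vtx \<Rightarrow> nat" where
  "lev v = (case v of S \<Rightarrow> 0 | Bot a j \<Rightarrow> j | Mid x r \<Rightarrow> h + r | Top a j \<Rightarrow> h + k + j | T \<Rightarrow> phi)"

lemma EG_I: "a \<in> Pidx \<Longrightarrow> j < phi \<Longrightarrow> {pathf a j, pathf a (Suc j)} \<in> EG"
  unfolding EG_def by blast

lemma VG_I: "a \<in> Pidx \<Longrightarrow> j \<le> phi \<Longrightarrow> pathf a j \<in> VG"
  unfolding VG_def by blast

lemma EG_E: "e \<in> EG \<Longrightarrow> (\<And>a j. a \<in> Pidx \<Longrightarrow> j < phi \<Longrightarrow> e = {pathf a j, pathf a (Suc j)} \<Longrightarrow> P) \<Longrightarrow> P"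
  unfolding EG_def by blast

lemma VG_E: "v \<in> VG \<Longrightarrow> (\<And>a j. a \<in> Pidx \<Longrightarrow> j \<le> phi \<Longrightarrow> v = pathf a j \<Longrightarrow> P) \<Longrightarrow> P"
  unfolding VG_def by blast

lemma lev_pathf: "j \<le> phi \<Longrightarrow> lev (pathf a j) = j"
  unfolding lev_def pathf_def phi_def by auto

lemma pathf_inj_lev: "j \<le> phi \<Longrightarrow> l \<le> phi \<Longrightarrow> pathf a j = pathf b l \<Longrightarrow> j = l"
  using lev_pathf by metis

lemma Pidx_fin: "finite Pidx"
proof -
  have "Pidx \<subseteq> {..<d} \<times> {..<n}" unfolding Pidx_def Sset_def by auto
  then show ?thesis by (meson finite_SigmaI finite_lessThan finite_subset)
qed

lemma cp_arc: "a \<in> Pidx \<Longrightarrow> r < k - 1 \<Longrightarrow> (cp a r, cp a (Suc r), fst a) \<in> A"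
  unfolding Pidx_def Sset_def cp_def by auto

lemma cp_X: "a \<in> Pidx \<Longrightarrow> r \<le> k - 1 \<Longrightarrow> cp a r \<in> {..<n}"
  unfolding cp_def Pidx_def using chain_X[OF gA] by auto

lemma cp_inj:
  assumes "a \<in> Pidx" "b \<in> Pidx" "fst a = fst b" "r \<le> k - 1" "cp a r = cp b r"
  shows "a = b"
proof -
  obtain i x y where ab: "a = (i, x)" "b = (i, y)" using assms(3) by (metis prod.collapse)
  have "x \<in> Sset n A i (k - 1)" "y \<in> Sset n A i (k - 1)" using assms(1,2) ab unfolding Pidx_def by auto
  then have "x = y" using chain_inj[OF gA] assms(4,5) ab unfolding cp_def by auto
  then show ?thesis using ab by simp
qed

lemma cp0: "cp a 0 = snd a" unfolding cp_def by simp

lemma pathf_Suc_ne: "j < phi \<Longrightarrow> pathf a j \<noteq> pathf a (Suc j)"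
  using pathf_inj_lev[of j "Suc j" a a] by auto

lemma EG_lev: "e \<in> EG \<Longrightarrow> \<exists>u v. e = {u, v} \<and> lev v = Suc (lev u)"
proof (erule EG_E)
  fix a j assume "a \<in> Pidx" "j < phi" "e = {pathf a j, pathf a (Suc j)}"
  then show ?thesis using lev_pathf[of j a] lev_pathf[of "Suc j" a]
    by (intro exI[of _ "pathf a j"] exI[of _ "pathf a (Suc j)"]) auto
qed

lemma path_len: "length (path a) = Suc phi" unfolding path_def by simp

lemma path_nth: "j \<le> phi \<Longrightarrow> path a ! j = pathf a j" unfolding path_def
  by (simp del: upt_Suc)

lemma path_walk: assumes "a \<in> Pidx" shows "is_walk VG EG (path a)"
proof -
  have "set (path a) \<subseteq> VG"
  proof
    fix v assume "v \<in> set (path a)"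
    then obtain j where j: "j < Suc phi" "v = path a ! j" by (metis in_set_conv_nth path_len)
    then have "v = pathf a j" by (simp add: path_nth)
    then show "v \<in> VG" using j(1) assms VG_I by simp
  qed
  moreover have "{path a ! i, path a ! Suc i} \<in> EG" if i: "Suc i < length (path a)" for i
  proof -
    have "path a ! i = pathf a i" "path a ! Suc i = pathf a (Suc i)" "i < phi"
      using i unfolding path_len by (auto simp: path_nth)
    then show ?thesis using assms EG_I by simp
  qed
  ultimately show ?thesis unfolding is_walk_def path_def by auto
qed

lemma path_hd: "hd (path a) = S" unfolding path_def pathf_def by (simp add: hd_map del: upt_Suc)

lemma path_last: "last (path a) = T"
proof -
  have "path a \<noteq> []" using path_len by (metis list.size(3) nat.distinct(1))
  then have "last (path a) = path a ! phi" using path_len by (simp add: last_conv_nth)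
  also have "\<dots> = pathf a phi" by (simp add: path_nth)
  also have "\<dots> = T" unfolding pathf_def phi_def by simp
  finally show ?thesis .
qed

lemma path_distinct: "distinct (path a)"
proof -
  have "inj_on (pathf a) {0..<Suc phi}" using pathf_inj_lev by (auto simp: inj_on_def)
  then show ?thesis unfolding path_def by (simp add: distinct_map del: upt_Suc)
qed

lemma walk_edges_path: "walk_edges (path a) = {{pathf a j, pathf a (Suc j)} | j. j < phi}"
proof (rule set_eqI)
  fix e
  have "(\<exists>i. e = {path a ! i, path a ! Suc i} \<and> Suc i < length (path a)) \<longleftrightarrow>
        (\<exists>j. e = {pathf a j, pathf a (Suc j)} \<and> j < phi)"
  proof
    assume "\<exists>i. e = {path a ! i, path a ! Suc i} \<and> Suc i < length (path a)"
    then obtain i where "e = {path a ! i, path a ! Suc i}" "Suc i < length (path a)" by blast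
    then show "\<exists>j. e = {pathf a j, pathf a (Suc j)} \<and> j < phi"
      by (intro exI[of _ i]) (auto simp: path_nth path_len)
  next
    assume "\<exists>j. e = {pathf a j, pathf a (Suc j)} \<and> j < phi"
    then obtain j where "e = {pathf a j, pathf a (Suc j)}" "j < phi" by blast
    then show "\<exists>i. e = {path a ! i, path a ! Suc i} \<and> Suc i < length (path a)"
      by (intro exI[of _ j]) (auto simp: path_nth path_len)
  qed
  then show "e \<in> walk_edges (path a) \<longleftrightarrow> e \<in> {{pathf a j, pathf a (Suc j)} | j. j < phi}"
    unfolding walk_edges_def by blast
qed

end


lemma last_append_tl: "p \<noteq> [] \<Longrightarrow> q \<noteq> [] \<Longrightarrow> last p = hd q \<Longrightarrow> last (p @ tl q) = last q"
  by (cases q) auto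

context constr
begin

lemma lev_S: "lev S = 0" and lev_T: "lev T = phi" unfolding lev_def by auto

lemma EG_adj_lev: "{x, y} \<in> EG \<Longrightarrow> lev y \<le> Suc (lev x)"
proof -
  assume "{x, y} \<in> EG"
  then obtain u v where "{x, y} = {u, v}" "lev v = Suc (lev u)" using EG_lev by blast
  then show ?thesis by (metis doubleton_eq_iff le_SucI order_refl lessI less_imp_le)
qed

lemma walk_lev: "is_walk VG EG p \<Longrightarrow> lev (last p) \<le> lev (hd p) + (length p - 1)"
proof (induction p rule: induct_list012)
  case 1 then show ?case by (simp add: is_walk_def)
next
  case (2 x) then show ?case by simp
next
  case (3 x y zs)
  have e: "{x, y} \<in> EG" and w: "is_walk VG EG (y # zs)" using 3(3) unfolding walk_Cons2 by auto
  have "lev (last (y # zs)) \<le> lev y + length zs" using 3(2)[OF w] by simp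
  then show ?case using EG_adj_lev[OF e] by simp
qed

lemma dist_ST: assumes "Pidx \<noteq> {}" shows "graph_dist VG EG S T = phi"
proof -
  obtain a0 where a0: "a0 \<in> Pidx" using assms by auto
  show ?thesis unfolding graph_dist_def
  proof (rule Least_equality)
    show "\<exists>p. is_walk VG EG p \<and> hd p = S \<and> last p = T \<and> length p = Suc phi"
      using path_walk[OF a0] path_hd path_last path_len by blast
    fix k assume "\<exists>p. is_walk VG EG p \<and> hd p = S \<and> last p = T \<and> length p = Suc k"
    then obtain p where p: "is_walk VG EG p" "hd p = S" "last p = T" "length p = Suc k" by blast
    show "phi \<le> k" using walk_lev[OF p(1)] p lev_S lev_T by simp
  qed
qed

lemma simple_VG: "simple_graph VG EG"
proof -
  have "finite VG"
  proof -
    have "VG = (\<lambda>(a, j). pathf a j) ` (Pidx \<times> {..phi})" unfolding VG_def by auto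
    then show ?thesis using Pidx_fin by simp
  qed
  moreover have "\<exists>u v. u \<in> VG \<and> v \<in> VG \<and> u \<noteq> v \<and> e = {u, v}" if "e \<in> EG" for e
  proof (rule EG_E[OF that])
    fix a j assume "a \<in> Pidx" "j < phi" "e = {pathf a j, pathf a (Suc j)}"
    then show ?thesis using VG_I[of a j] VG_I[of a "Suc j"] pathf_Suc_ne[of j a]
      by (intro exI[of _ "pathf a j"] exI[of _ "pathf a (Suc j)"]) auto
  qed
  ultimately show ?thesis unfolding simple_graph_def by blast
qed

lemma walk_to_S: assumes "a \<in> Pidx" "j \<le> phi"
  shows "\<exists>p. is_walk VG EG p \<and> hd p = pathf a j \<and> last p = S"
proof -
  let ?q = "take (Suc j) (path a)"
  have w: "is_walk VG EG ?q" by (rule walk_take[OF path_walk[OF assms(1)]]) simp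
  have ne: "?q \<noteq> []" using path_len by (metis Zero_not_Suc list.size(3) take_eq_Nil)
  have "length ?q = Suc j" using assms(2) path_len by simp
  then have "last ?q = ?q ! j" using ne by (simp add: last_conv_nth)
  then have "last ?q = path a ! j" by simp
  then have l: "last ?q = pathf a j" using assms(2) by (simp add: path_nth)
  have h: "hd ?q = S" using path_hd path_len by (metis hd_take zero_less_Suc)
  show ?thesis using walk_rev[OF w] l h ne by (intro exI[of _ "rev ?q"]) (auto simp: hd_rev last_rev)
qed

lemma connected_VG: assumes "Pidx \<noteq> {}" shows "connected_graph VG EG"
proof -
  have "VG \<noteq> {}" using assms VG_I[of _ 0] by blast
  moreover have "\<exists>p. is_walk VG EG p \<and> hd p = u \<and> last p = v" if uv: "u \<in> VG" "v \<in> VG" for u v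
  proof -
    obtain a j where a: "a \<in> Pidx" "j \<le> phi" "u = pathf a j" using uv(1) by (rule VG_E)
    obtain b l where b: "b \<in> Pidx" "l \<le> phi" "v = pathf b l" using uv(2) by (rule VG_E)
    obtain p where p: "is_walk VG EG p" "hd p = u" "last p = S" using walk_to_S[OF a(1,2)] a(3) by blast
    obtain q0 where q0: "is_walk VG EG q0" "hd q0 = v" "last q0 = S" using walk_to_S[OF b(1,2)] b(3) by blast
    let ?q = "rev q0"
    have q: "is_walk VG EG ?q" "hd ?q = S" "last ?q = v" "?q \<noteq> []" "q0 \<noteq> []"
      using walk_rev[OF q0(1)] q0 unfolding is_walk_def by (auto simp: hd_rev last_rev)
    have pne: "p \<noteq> []" using p(1) unfolding is_walk_def by auto
    have "is_walk VG EG (p @ tl ?q)" using walk_append[OF p(1) q(1)] p(3) q(2) by simp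
    moreover have "hd (p @ tl ?q) = u" using pne p(2) by simp
    moreover have "last (p @ tl ?q) = v" using last_append_tl[OF pne q(4)] p(3) q(2,3) by simp
    ultimately show ?thesis by blast
  qed
  ultimately show ?thesis unfolding connected_graph_def by blast
qed

lemma pathf_Bot: "1 \<le> j \<Longrightarrow> j \<le> h \<Longrightarrow> pathf a j = Bot a j"
  unfolding pathf_def by simp

lemma pathf_Mid: "h < j \<Longrightarrow> j \<le> h + k \<Longrightarrow> pathf a j = Mid (cp a (j - h - 1)) (j - h)"
  unfolding pathf_def by simp

lemma pathf_Top: "h + k < j \<Longrightarrow> j \<le> 2 * h + k \<Longrightarrow> pathf a j = Top a (j - h - k)"
  unfolding pathf_def by simp

lemma same_edge_same_path:
  assumes a: "a \<in> Pidx" and b: "b \<in> Pidx" and j: "j < phi"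
    and e1: "pathf a j = pathf b j" and e2: "pathf a (Suc j) = pathf b (Suc j)"
  shows "a = b"
proof -
  have jph: "j < 2 * h + k + 1" using j unfolding phi_def .
  consider "j = 0" | "1 \<le> j" "j \<le> h" | "h < j" "Suc j \<le> h + k" | "j = h + k" | "h + k < j" "j \<le> 2 * h + k"
  proof -
    assume c1: "j = 0 \<Longrightarrow> ?thesis" and c2: "1 \<le> j \<Longrightarrow> j \<le> h \<Longrightarrow> ?thesis"
      and c3: "h < j \<Longrightarrow> Suc j \<le> h + k \<Longrightarrow> ?thesis" and c4: "j = h + k \<Longrightarrow> ?thesis"
      and c5: "h + k < j \<Longrightarrow> j \<le> 2 * h + k \<Longrightarrow> ?thesis"
    show ?thesis
    proof (cases "j = 0")
      case True then show ?thesis by (rule c1)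
    next
      case F0: False
      show ?thesis
      proof (cases "j \<le> h")
        case True then show ?thesis using c2 F0 by simp
      next
        case F1: False
        show ?thesis
        proof (cases "Suc j \<le> h + k")
          case True then show ?thesis using c3 F1 by simp
        next
          case F2: False
          show ?thesis
          proof (cases "j = h + k")
            case True then show ?thesis by (rule c4)
          next
            case False then show ?thesis using c5 F2 jph by simp
          qed
        qed
      qed
    qed
  qed
  then show ?thesis
  proof cases
    case 1
    have "pathf a 1 = Bot a 1" using h1 by (intro pathf_Bot) auto
    moreover have "pathf b 1 = Bot b 1" using h1 by (intro pathf_Bot) auto
    moreover have "pathf a 1 = pathf b 1" using e2 1 by simp
    ultimately have "Bot a 1 = Bot b 1" by argo
    then show ?thesis by simp
  next
    case 2
    have "pathf a j = Bot a j" using 2 by (intro pathf_Bot)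
    moreover have "pathf b j = Bot b j" using 2 by (intro pathf_Bot)
    ultimately have "Bot a j = Bot b j" using e1 by argo
    then show ?thesis by simp
  next
    case 3
    define r where "r = j - h - 1"
    have r: "r < k - 1" "j - h = Suc r" using 3 unfolding r_def by auto
    have "pathf a j = Mid (cp a (j - h - 1)) (j - h)" using 3 by (intro pathf_Mid) auto
    moreover have "pathf b j = Mid (cp b (j - h - 1)) (j - h)" using 3 by (intro pathf_Mid) auto
    ultimately have "pathf a j = Mid (cp a r) (Suc r)" "pathf b j = Mid (cp b r) (Suc r)"
      using r unfolding r_def by simp_all
    then have "Mid (cp a r) (Suc r) = Mid (cp b r) (Suc r)" using e1 by argo
    then have c1: "cp a r = cp b r" by simp
    have "Suc j - h - 1 = Suc r" "Suc j - h = Suc (Suc r)" using 3 unfolding r_def by auto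
    moreover have "pathf a (Suc j) = Mid (cp a (Suc j - h - 1)) (Suc j - h)" using 3 by (intro pathf_Mid) auto
    moreover have "pathf b (Suc j) = Mid (cp b (Suc j - h - 1)) (Suc j - h)" using 3 by (intro pathf_Mid) auto
    ultimately have "pathf a (Suc j) = Mid (cp a (Suc r)) (Suc (Suc r))" "pathf b (Suc j) = Mid (cp b (Suc r)) (Suc (Suc r))"
      by simp_all
    then have "Mid (cp a (Suc r)) (Suc (Suc r)) = Mid (cp b (Suc r)) (Suc (Suc r))" using e2 by argo
    then have c2: "cp a (Suc r) = cp b (Suc r)" by simp
    have arcs: "(cp a r, cp a (Suc r), fst a) \<in> A" "(cp b r, cp b (Suc r), fst b) \<in> A"
      using cp_arc a b r by auto
    from goodD5[OF gA, rule_format, OF arcs(1) arcs(2)] c1 c2 have "fst a = fst b" by simp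
    then show ?thesis using cp_inj[OF a b _ _ c1] r by simp
  next
    case 4
    have c: "h + k < Suc j" "Suc j \<le> 2 * h + k" "Suc j - h - k = 1" using 4 h1 by auto
    have "pathf a (Suc j) = Top a 1" using pathf_Top[OF c(1,2), of a] c(3) by simp
    moreover have "pathf b (Suc j) = Top b 1" using pathf_Top[OF c(1,2), of b] c(3) by simp
    ultimately have "Top a 1 = Top b 1" using e2 by argo
    then show ?thesis by simp
  next
    case 5
    have "pathf a j = Top a (j - h - k)" using 5 by (intro pathf_Top)
    moreover have "pathf b j = Top b (j - h - k)" using 5 by (intro pathf_Top)
    ultimately have "Top a (j - h - k) = Top b (j - h - k)" using e1 by argo
    then show ?thesis by simp
  qed
qed

lemma paths_disjoint:
  assumes a: "a \<in> Pidx" and b: "b \<in> Pidx" and ab: "a \<noteq> b"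
  shows "walk_edges (path a) \<inter> walk_edges (path b) = {}"
proof (rule ccontr)
  assume "walk_edges (path a) \<inter> walk_edges (path b) \<noteq> {}"
  then obtain j l where jl: "j < phi" "l < phi" "{pathf a j, pathf a (Suc j)} = {pathf b l, pathf b (Suc l)}"
    unfolding walk_edges_path by blast
  then consider "pathf a j = pathf b l" "pathf a (Suc j) = pathf b (Suc l)"
    | "pathf a j = pathf b (Suc l)" "pathf a (Suc j) = pathf b l" by (metis doubleton_eq_iff)
  then show False
  proof cases
    case 1
    then have "lev (pathf a j) = lev (pathf b l)" by simp
    then have "j = l" using lev_pathf[of j a] lev_pathf[of l b] jl by simp
    then show False using same_edge_same_path[OF a b jl(1)] 1 ab by simp
  next
    case 2
    then have "lev (pathf a j) = lev (pathf b (Suc l))" by simp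
    then have "j = Suc l" using lev_pathf[of j a] lev_pathf[of "Suc l" b] jl by simp
    have "lev (pathf a (Suc j)) = lev (pathf b l)" using 2 by simp
    then have "Suc j = l" using lev_pathf[of "Suc j" a] lev_pathf[of l b] jl \<open>j = Suc l\<close> by simp
    then show False using \<open>j = Suc l\<close> by simp
  qed
qed

lemma EG_UN: "EG = (\<Union>a\<in>Pidx. walk_edges (path a))"
  unfolding walk_edges_path EG_def by blast

lemma card_walk_edges_path: "card (walk_edges (path a)) = phi"
proof -
  have eq: "walk_edges (path a) = (\<lambda>j. {pathf a j, pathf a (Suc j)}) ` {..<phi}"
    unfolding walk_edges_path by auto
  have "inj_on (\<lambda>j. {pathf a j, pathf a (Suc j)}) {..<phi}"
  proof (rule inj_onI)
    fix j l assume jl: "j \<in> {..<phi}" "l \<in> {..<phi}" "{pathf a j, pathf a (Suc j)} = {pathf a l, pathf a (Suc l)}"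
    then consider "pathf a j = pathf a l" | "pathf a j = pathf a (Suc l)" "pathf a (Suc j) = pathf a l"
      by (metis doubleton_eq_iff)
    then show "j = l"
    proof cases
      case 1 then show ?thesis using pathf_inj_lev[of j l a a] jl by simp
    next
      case 2
      then have "j = Suc l" using pathf_inj_lev[of j "Suc l" a a] jl by simp
      then show ?thesis using 2 pathf_inj_lev[of "Suc j" l a a] jl by simp
    qed
  qed
  then show ?thesis unfolding eq by (simp add: card_image)
qed

lemma card_EG: "card EG = card Pidx * phi"
proof -
  have "card EG = (\<Sum>a\<in>Pidx. card (walk_edges (path a)))"
    unfolding EG_UN
  proof (rule card_UN_disjoint[OF Pidx_fin])
    show "\<forall>a\<in>Pidx. finite (walk_edges (path a))" unfolding walk_edges_path by auto
    show "\<forall>a\<in>Pidx. \<forall>b\<in>Pidx. a \<noteq> b \<longrightarrow> walk_edges (path a) \<inter> walk_edges (path b) = {}"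
      using paths_disjoint by blast
  qed
  then show ?thesis by (simp add: card_walk_edges_path)
qed

lemma base_VG: assumes "Pidx \<noteq> {}" shows "base_graph VG EG S T phi"
  unfolding base_graph_def
proof (intro conjI exI[of _ "path ` Pidx"])
  show "simple_graph VG EG" by (rule simple_VG)
  show "connected_graph VG EG" by (rule connected_VG[OF assms])
  obtain a0 where a0: "a0 \<in> Pidx" using assms by auto
  show "S \<in> VG" using VG_I[OF a0, of 0] unfolding pathf_def by simp
  show "T \<in> VG" using VG_I[OF a0, of phi] unfolding pathf_def phi_def by simp
  show "\<forall>p\<in>path ` Pidx. is_path VG EG S T p \<and> length p = Suc phi \<and> graph_dist VG EG S T = phi"
    using path_walk path_distinct path_hd path_last path_len dist_ST[OF assms] unfolding is_path_def by blast
  show "\<forall>p\<in>path ` Pidx. \<forall>q\<in>path ` Pidx. p \<noteq> q \<longrightarrow> walk_edges p \<inter> walk_edges q = {}"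
    using paths_disjoint by blast
  show "(\<Union>p\<in>path ` Pidx. walk_edges p) = EG" unfolding EG_UN by simp
qed

end


fun mx :: "vtx \<Rightarrow> nat" where
  "mx (Mid x r) = x"
| "mx _ = 0"

context constr
begin

definition priv :: "nat \<Rightarrow> bool" where
  "priv j \<longleftrightarrow> (1 \<le> j \<and> j \<le> h) \<or> (h + k < j \<and> j \<le> 2 * h + k)"

lemma priv_same: assumes "priv j" "pathf a j = pathf b j" shows "a = b"
proof (cases "1 \<le> j \<and> j \<le> h")
  case True
  have "pathf a j = Bot a j" using True by (intro pathf_Bot) auto
  moreover have "pathf b j = Bot b j" using True by (intro pathf_Bot) auto
  ultimately have "Bot a j = Bot b j" using assms(2) by argo
  then show ?thesis by simp
next
  case False
  then have c: "h + k < j" "j \<le> 2 * h + k" using assms(1) unfolding priv_def by auto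
  have "pathf a j = Top a (j - h - k)" using c by (intro pathf_Top)
  moreover have "pathf b j = Top b (j - h - k)" using c by (intro pathf_Top)
  ultimately have "Top a (j - h - k) = Top b (j - h - k)" using assms(2) by argo
  then show ?thesis by simp
qed

lemma priv_phi: "priv j \<Longrightarrow> 1 \<le> j \<and> j < phi"
  unfolding priv_def phi_def by auto

lemma lev_eq: "j \<le> phi \<Longrightarrow> l \<le> phi \<Longrightarrow> pathf a j = pathf b l \<Longrightarrow> j = l"
proof -
  assume "j \<le> phi" "l \<le> phi" "pathf a j = pathf b l"
  moreover have "lev (pathf a j) = lev (pathf b l)" using \<open>pathf a j = pathf b l\<close> by simp
  ultimately show "j = l" using lev_pathf[of j a] lev_pathf[of l b] by simp
qed

lemma nbr_priv:
  assumes a: "a \<in> Pidx" and pj: "priv j" and e: "{pathf a j, u} \<in> EG"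
  shows "u = pathf a (j - 1) \<or> u = pathf a (Suc j)"
proof -
  have j: "1 \<le> j" "j < phi" using priv_phi[OF pj] by auto
  obtain b l where bl: "b \<in> Pidx" "l < phi" "{pathf a j, u} = {pathf b l, pathf b (Suc l)}"
    using e by (rule EG_E)
  then consider "pathf a j = pathf b l" "u = pathf b (Suc l)" | "pathf a j = pathf b (Suc l)" "u = pathf b l"
    by (metis doubleton_eq_iff)
  then show ?thesis
  proof cases
    case 1
    then have "j = l" using lev_eq j bl by simp
    then have "a = b" using priv_same[OF pj] 1 by simp
    then show ?thesis using 1 \<open>j = l\<close> by simp
  next
    case 2
    then have "j = Suc l" using lev_eq j bl by simp
    then have "a = b" using priv_same[OF pj] 2 by simp
    then show ?thesis using 2 \<open>j = Suc l\<close> by simp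
  qed
qed

lemma nbr_S: assumes "{S, u} \<in> EG" shows "\<exists>b\<in>Pidx. u = pathf b 1"
proof -
  obtain b l where bl: "b \<in> Pidx" "l < phi" "{S, u} = {pathf b l, pathf b (Suc l)}"
    using assms by (rule EG_E)
  have S0: "S = pathf b 0" unfolding pathf_def by simp
  then consider "S = pathf b l" "u = pathf b (Suc l)" | "S = pathf b (Suc l)" "u = pathf b l"
    using bl(3) by (metis doubleton_eq_iff)
  then show ?thesis
  proof cases
    case 1
    then have "l = 0" using lev_eq[of 0 l b b] S0 bl by simp
    then show ?thesis using 1 bl by auto
  next
    case 2
    then have "0 = Suc l" using lev_eq[of 0 "Suc l" b b] S0 bl by simp
    then show ?thesis by simp
  qed
qed

lemma nbr_T: assumes "{T, u} \<in> EG" shows "\<exists>b\<in>Pidx. u = pathf b (2 * h + k)"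
proof -
  obtain b l where bl: "b \<in> Pidx" "l < phi" "{T, u} = {pathf b l, pathf b (Suc l)}"
    using assms by (rule EG_E)
  have T0: "T = pathf b phi" unfolding pathf_def phi_def by simp
  then consider "T = pathf b l" "u = pathf b (Suc l)" | "T = pathf b (Suc l)" "u = pathf b l"
    using bl(3) by (metis doubleton_eq_iff)
  then show ?thesis
  proof cases
    case 1
    then have "phi = l" using lev_eq[of phi l b b] T0 bl by simp
    then show ?thesis using bl by simp
  next
    case 2
    then have "phi = Suc l" using lev_eq[of phi "Suc l" b b] T0 bl by simp
    then have "l = 2 * h + k" unfolding phi_def by simp
    then show ?thesis using 2 bl by auto
  qed
qed

lemma priv_step:
  assumes c: "is_cycle VG EG c" and a: "a \<in> Pidx" and pj: "priv j" and inc: "pathf a j \<in> set c"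
  shows "pathf a (j - 1) \<in> set c \<and> pathf a (Suc j) \<in> set c"
proof -
  obtain u1 u2 where u: "u1 \<noteq> u2" "u1 \<in> set c" "u2 \<in> set c" "{pathf a j, u1} \<in> EG" "{pathf a j, u2} \<in> EG"
    using cycle_nbrs[OF c inc] by blast
  have "u1 = pathf a (j - 1) \<or> u1 = pathf a (Suc j)" using nbr_priv[OF a pj u(4)] .
  moreover have "u2 = pathf a (j - 1) \<or> u2 = pathf a (Suc j)" using nbr_priv[OF a pj u(5)] .
  ultimately show ?thesis using u(1-3) by auto
qed

lemma closure_up:
  assumes c: "is_cycle VG EG c" and a: "a \<in> Pidx" and pr: "\<And>j. lo \<le> j \<Longrightarrow> j \<le> hi \<Longrightarrow> priv j"
    and j0: "lo \<le> j0" and inc: "pathf a j0 \<in> set c"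
  shows "j0 + t \<le> Suc hi \<Longrightarrow> pathf a (j0 + t) \<in> set c"
proof (induction t)
  case 0 then show ?case using inc by simp
next
  case (Suc t)
  then have "pathf a (j0 + t) \<in> set c" by simp
  moreover have "priv (j0 + t)" using pr j0 Suc(2) by simp
  ultimately show ?case using priv_step[OF c a] by simp
qed

lemma closure_down:
  assumes c: "is_cycle VG EG c" and a: "a \<in> Pidx" and pr: "\<And>j. lo \<le> j \<Longrightarrow> j \<le> hi \<Longrightarrow> priv j"
    and j0: "j0 \<le> hi" and inc: "pathf a j0 \<in> set c"
  shows "t \<le> j0 \<Longrightarrow> lo \<le> j0 - t + 1 \<Longrightarrow> pathf a (j0 - t) \<in> set c"
proof (induction t)
  case 0 then show ?case using inc by simp
next
  case (Suc t)
  then have "pathf a (j0 - t) \<in> set c" by simp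
  moreover have "priv (j0 - t)" using pr j0 Suc(2,3) by simp
  moreover have "j0 - t - 1 = j0 - Suc t" by simp
  ultimately show ?case using priv_step[OF c a] by metis
qed

lemma card_two_chains:
  assumes ab: "a \<noteq> b" and sub: "insert v (f a ` {1..h} \<union> f b ` {1..h}) \<subseteq> set c"
    and dc: "distinct c" and fi: "\<And>x. inj (f x)" and fd: "\<And>i j. f a i \<noteq> f b j"
    and fv: "\<And>x i. f x i \<noteq> v"
  shows "2 * h + 1 \<le> length c"
proof -
  have d1: "v \<notin> f a ` {1..h} \<union> f b ` {1..h}" using fv by auto
  have d2: "f a ` {1..h} \<inter> f b ` {1..h} = {}" using fd by auto
  have "card (insert v (f a ` {1..h} \<union> f b ` {1..h})) = Suc (card (f a ` {1..h}) + card (f b ` {1..h}))"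
    using d1 d2 by (simp add: card_Un_disjoint)
  also have "\<dots> = Suc (h + h)" using fi by (simp add: card_image inj_on_subset[OF fi])
  finally have "2 * h + 1 \<le> card (set c)" using card_mono[OF _ sub] by simp
  then show ?thesis using distinct_card[OF dc] by simp
qed

lemma S_cycle: assumes c: "is_cycle VG EG c" and S: "S \<in> set c" shows "2 * h + 1 \<le> length c"
proof -
  obtain u1 u2 where u: "u1 \<noteq> u2" "u1 \<in> set c" "u2 \<in> set c" "{S, u1} \<in> EG" "{S, u2} \<in> EG"
    using cycle_nbrs[OF c S] by blast
  obtain a b where ab: "a \<in> Pidx" "b \<in> Pidx" "u1 = pathf a 1" "u2 = pathf b 1"
    using nbr_S[OF u(4)] nbr_S[OF u(5)] by blast
  have anb: "a \<noteq> b" using u(1) ab by auto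
  have pr: "\<And>j. 1 \<le> j \<Longrightarrow> j \<le> h \<Longrightarrow> priv j" unfolding priv_def by simp
  have inc: "Bot x j \<in> set c" if x: "x = a \<or> x = b" and j: "j \<in> {1..h}" for x j
  proof -
    have x1: "x \<in> Pidx" "pathf x 1 \<in> set c" using x ab u by auto
    have "pathf x (1 + (j - 1)) \<in> set c"
      by (rule closure_up[OF c x1(1) pr _ x1(2)]) (use j in auto)
    moreover have "pathf x j = Bot x j" using j by (intro pathf_Bot) auto
    ultimately show ?thesis using j by simp
  qed
  have sub: "insert S (Bot a ` {1..h} \<union> Bot b ` {1..h}) \<subseteq> set c" using inc[of a] inc[of b] S by auto
  show ?thesis
    by (rule card_two_chains[OF anb sub]) (use c anb in \<open>auto simp: is_cycle_def inj_def\<close>)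
qed

lemma T_cycle: assumes c: "is_cycle VG EG c" and T: "T \<in> set c" shows "2 * h + 1 \<le> length c"
proof -
  obtain u1 u2 where u: "u1 \<noteq> u2" "u1 \<in> set c" "u2 \<in> set c" "{T, u1} \<in> EG" "{T, u2} \<in> EG"
    using cycle_nbrs[OF c T] by blast
  obtain a b where ab: "a \<in> Pidx" "b \<in> Pidx" "u1 = pathf a (2 * h + k)" "u2 = pathf b (2 * h + k)"
    using nbr_T[OF u(4)] nbr_T[OF u(5)] by blast
  have anb: "a \<noteq> b" using u(1) ab by auto
  have pr: "\<And>j. h + k + 1 \<le> j \<Longrightarrow> j \<le> 2 * h + k \<Longrightarrow> priv j" unfolding priv_def by simp
  have inc: "Top x i \<in> set c" if x: "x = a \<or> x = b" and i: "i \<in> {1..h}" for x i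
  proof -
    have x1: "x \<in> Pidx" "pathf x (2 * h + k) \<in> set c" using x ab u by auto
    have "pathf x (2 * h + k - (h - i)) \<in> set c"
      by (rule closure_down[OF c x1(1) pr _ x1(2)]) (use i in auto)
    moreover have "2 * h + k - (h - i) = h + k + i" using i by auto
    moreover have "pathf x (h + k + i) = Top x i" using i pathf_Top[of "h + k + i" x] by auto
    ultimately show ?thesis by simp
  qed
  have sub: "insert T (Top a ` {1..h} \<union> Top b ` {1..h}) \<subseteq> set c" using inc[of a] inc[of b] T by auto
  show ?thesis
    by (rule card_two_chains[OF anb sub]) (use c anb in \<open>auto simp: is_cycle_def inj_def\<close>)
qed

definition midr :: "vtx \<Rightarrow> bool" where "midr v \<longleftrightarrow> h < lev v \<and> lev v \<le> h + k"

lemma mid_form: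
  assumes v: "v \<in> VG" and m: "midr v"
  shows "v = Mid (mx v) (lev v - h) \<and> mx v \<in> {..<n}"
proof -
  obtain b j where bj: "b \<in> Pidx" "j \<le> phi" "v = pathf b j" using v by (rule VG_E)
  have lj: "lev v = j" using bj lev_pathf by simp
  then have j: "h < j" "j \<le> h + k" using m unfolding midr_def by auto
  have "v = Mid (cp b (j - h - 1)) (j - h)" using bj(3) j by (simp add: pathf_Mid)
  moreover have "cp b (j - h - 1) \<in> {..<n}" using cp_X[OF bj(1)] j by simp
  ultimately show ?thesis using lj by simp
qed

lemma mid_edge_dir:
  assumes b: "b \<in> Pidx" and l: "l < phi" and m1: "midr (pathf b l)" and m2: "midr (pathf b (Suc l))"
  shows "lev (pathf b (Suc l)) = Suc (lev (pathf b l)) \<and> (mx (pathf b l), mx (pathf b (Suc l)), fst b) \<in> A"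
proof -
  have lv: "lev (pathf b l) = l" "lev (pathf b (Suc l)) = Suc l" using lev_pathf l by auto
  then have r: "h < l" "Suc l \<le> h + k" using m1 m2 unfolding midr_def by auto
  define r where "r = l - h - 1"
  have rr: "r < k - 1" "Suc l - h - 1 = Suc r" using r unfolding r_def by auto
  have "pathf b l = Mid (cp b r) (l - h)" unfolding r_def using r by (simp add: pathf_Mid)
  moreover have "pathf b (Suc l) = Mid (cp b (Suc r)) (Suc l - h)"
    using r rr(2) pathf_Mid[of "Suc l" b] by simp
  ultimately have "mx (pathf b l) = cp b r" "mx (pathf b (Suc l)) = cp b (Suc r)" by simp_all
  then show ?thesis using cp_arc[OF b rr(1)] lv by simp
qed

lemma mid_edge:
  assumes e: "{u, v} \<in> EG" and mu: "midr u" and mv: "midr v"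
  shows "(lev v = Suc (lev u) \<and> (\<exists>i. (mx u, mx v, i) \<in> A)) \<or>
         (lev u = Suc (lev v) \<and> (\<exists>i. (mx v, mx u, i) \<in> A))"
proof -
  obtain b l where bl: "b \<in> Pidx" "l < phi" "{u, v} = {pathf b l, pathf b (Suc l)}"
    using e by (rule EG_E)
  then consider "u = pathf b l" "v = pathf b (Suc l)" | "u = pathf b (Suc l)" "v = pathf b l"
    by (metis doubleton_eq_iff)
  then show ?thesis
  proof cases
    case 1 then show ?thesis using mid_edge_dir[OF bl(1,2)] mu mv by blast
  next
    case 2 then show ?thesis using mid_edge_dir[OF bl(1,2)] mu mv by blast
  qed
qed

lemma EH_I: "(x, y, i) \<in> A \<Longrightarrow> {x, y} \<in> EH A" unfolding EH_def by blast

lemma mid_cycle: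
  assumes c: "is_cycle VG EG c" and allm: "\<And>v. v \<in> set c \<Longrightarrow> midr v"
  shows "2 * h + 1 \<le> length c"
proof -
  let ?L = "length c"
  have L3: "3 \<le> ?L" using c by (rule cycle_len)
  have Lp: "0 < ?L" using L3 by linarith
  have dc: "distinct c" and sc: "set c \<subseteq> VG" using c unfolding is_cycle_def is_walk_def by auto
  define F where "F = (\<lambda>t. c ! (t mod ?L))"
  have Fin: "F t \<in> set c" for t unfolding F_def using Lp by simp
  have FV: "F t \<in> VG" for t using Fin sc by auto
  have Fm: "midr (F t)" for t using Fin allm by auto
  have FE: "{F t, F (Suc t)} \<in> EG" for t unfolding F_def by (rule cycle_edge_mod[OF c])
  define w where "w = (\<lambda>t. mx (F t))"
  have "\<exists>c'. is_cycle {..<n} (EH A) c' \<and> length c' \<le> ?L"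
  proof (rule extract_cycle[where w = w])
    show "\<And>e. e \<in> EH A \<Longrightarrow> \<exists>u v. u \<noteq> v \<and> e = {u, v}"
      unfolding EH_def using goodD2[OF gA] by blast
    show "1 \<le> ?L" using L3 by simp
    show "w 0 = w ?L" unfolding w_def F_def by simp
    show "\<And>j. j \<le> ?L \<Longrightarrow> w j \<in> {..<n}" unfolding w_def using mid_form FV Fm by blast
    show "{w j, w (Suc j)} \<in> EH A" if "j < ?L" for j
    proof -
      from mid_edge[OF FE Fm Fm] obtain i where
        "(mx (F j), mx (F (Suc j)), i) \<in> A \<or> (mx (F (Suc j)), mx (F j), i) \<in> A" by blast
      then show ?thesis
      proof
        assume "(mx (F j), mx (F (Suc j)), i) \<in> A"
        then show ?thesis unfolding w_def by (rule EH_I)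
      next
        assume "(mx (F (Suc j)), mx (F j), i) \<in> A"
        then have "{mx (F (Suc j)), mx (F j)} \<in> EH A" by (rule EH_I)
        then show ?thesis unfolding w_def by (simp add: insert_commute)
      qed
    qed
    show "w (j - 1) \<noteq> w (Suc j)" if j: "0 < j" "j < ?L" for j
    proof
      assume eq: "w (j - 1) = w (Suc j)"
      let ?u = "F (j - 1)" and ?v = "F j" and ?z = "F (Suc j)"
      have uz: "?u \<noteq> ?z"
      proof -
        have "(j - 1) mod ?L = j - 1" using j by simp
        moreover have "Suc j mod ?L \<noteq> j - 1"
        proof (cases "Suc j < ?L")
          case True then show ?thesis by simp
        next
          case False then have "Suc j = ?L" using j by simp
          then show ?thesis using L3 by simp
        qed
        moreover have "Suc j mod ?L < ?L" using Lp by simp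
        ultimately show ?thesis unfolding F_def using dc j
          by (simp add: nth_eq_iff_index_eq)
      qed
      have e1: "{?u, ?v} \<in> EG" using FE[of "j - 1"] j by simp
      have e2: "{?v, ?z} \<in> EG" using FE[of j] by simp
      have mu: "mx ?u = mx ?z" using eq unfolding w_def .
      have fu: "?u = Mid (mx ?u) (lev ?u - h)" and fz: "?z = Mid (mx ?z) (lev ?z - h)"
        using mid_form FV Fm by blast+
      have levne: "lev ?u \<noteq> lev ?z"
      proof
        assume "lev ?u = lev ?z"
        then have "?u = ?z" using fu fz mu by argo
        then show False using uz by simp
      qed
      have A2: "\<And>x y i. (x, y, i) \<in> A \<Longrightarrow> x \<noteq> y" using goodD2[OF gA] by blast
      have A5: "\<And>x y i y' i'. (x, y, i) \<in> A \<Longrightarrow> (y, x, i') \<in> A \<Longrightarrow> False"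
      proof -
        fix x y i y' i' assume h1: "(x, y, i) \<in> A" and h2: "(y, x, i') \<in> A"
        have "{x, y} = {y, x}" by (rule insert_commute)
        from goodD5[OF gA, rule_format, OF h1 h2 this] have "x = y" by (rule conjunct1)
        then show False using A2 h1 by blast
      qed
      from mid_edge[OF e1 Fm Fm] show False
      proof
        assume h1: "lev ?v = Suc (lev ?u) \<and> (\<exists>i. (mx ?u, mx ?v, i) \<in> A)"
        from mid_edge[OF e2 Fm Fm] show False
        proof
          assume h2: "lev ?z = Suc (lev ?v) \<and> (\<exists>i. (mx ?v, mx ?z, i) \<in> A)"
          obtain i i' where "(mx ?u, mx ?v, i) \<in> A" "(mx ?v, mx ?z, i') \<in> A" using h1 h2 by blast
          then show False using A5 mu by metis
        next
          assume h2: "lev ?v = Suc (lev ?z) \<and> (\<exists>i. (mx ?z, mx ?v, i) \<in> A)"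
          then show False using h1 levne by linarith
        qed
      next
        assume h1: "lev ?u = Suc (lev ?v) \<and> (\<exists>i. (mx ?v, mx ?u, i) \<in> A)"
        from mid_edge[OF e2 Fm Fm] show False
        proof
          assume h2: "lev ?z = Suc (lev ?v) \<and> (\<exists>i. (mx ?v, mx ?z, i) \<in> A)"
          then show False using h1 levne by linarith
        next
          assume h2: "lev ?v = Suc (lev ?z) \<and> (\<exists>i. (mx ?z, mx ?v, i) \<in> A)"
          obtain i i' where "(mx ?v, mx ?u, i) \<in> A" "(mx ?z, mx ?v, i') \<in> A" using h1 h2 by blast
          then show False using A5 mu by metis
        qed
      qed
    qed
  qed
  then obtain c' where "is_cycle {..<n} (EH A) c'" "length c' \<le> ?L" by blast
  moreover have "2 * h + 1 \<le> length c'" using goodD6[OF gA] calculation(1) by blast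
  ultimately show ?thesis by simp
qed

lemma cycle_long: assumes c: "is_cycle VG EG c" shows "2 * h + 1 \<le> length c"
proof (cases "S \<in> set c \<or> T \<in> set c")
  case True then show ?thesis using S_cycle[OF c] T_cycle[OF c] by blast
next
  case False
  have sc: "set c \<subseteq> VG" using c unfolding is_cycle_def is_walk_def by auto
  have "midr v" if v: "v \<in> set c" for v
  proof (rule ccontr)
    assume nm: "\<not> midr v"
    obtain b j where bj: "b \<in> Pidx" "j \<le> phi" "v = pathf b j" using v sc by (meson VG_E subsetD)
    have lv: "lev v = j" using bj lev_pathf by simp
    consider "j = 0" | "1 \<le> j" "j \<le> h" | "h + k < j" "j \<le> 2 * h + k" | "j = phi"
      using nm lv bj(2) unfolding midr_def phi_def by linarith
    then show False
    proof cases
      case 1 then have "v = S" using bj unfolding pathf_def by simp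
      then show False using False v by simp
    next
      case 2
      have pr: "\<And>i. 1 \<le> i \<Longrightarrow> i \<le> h \<Longrightarrow> priv i" unfolding priv_def by simp
      have "pathf b (j - j) \<in> set c"
        by (rule closure_down[OF c bj(1) pr 2(2)]) (use 2 v bj in auto)
      then have "S \<in> set c" unfolding pathf_def by simp
      then show False using False by simp
    next
      case 3
      have pr: "\<And>i. h + k + 1 \<le> i \<Longrightarrow> i \<le> 2 * h + k \<Longrightarrow> priv i" unfolding priv_def by simp
      have "pathf b (j + (phi - j)) \<in> set c"
        by (rule closure_up[OF c bj(1) pr _ ]) (use 3 v bj in \<open>auto simp: phi_def\<close>)
      then have "T \<in> set c" using bj(2) unfolding pathf_def phi_def by simp
      then show False using False by simp
    next
      case 4 then have "v = T" using bj unfolding pathf_def phi_def by simp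
      then show False using False v by simp
    qed
  qed
  then show ?thesis by (rule mid_cycle[OF c])
qed

lemma short_cycle:
  assumes a: "a \<in> Pidx" and b: "b \<in> Pidx" and ab: "a \<noteq> b" and sn: "snd a = snd b"
  shows "\<exists>c. is_cycle VG EG c \<and> length c \<le> 2 * h + 2"
proof -
  define w where "w = (\<lambda>t. if t \<le> h + 1 then pathf a t else pathf b (2 * h + 2 - t))"
  have mideq: "pathf a (h + 1) = pathf b (h + 1)"
  proof -
    have "pathf a (h + 1) = Mid (cp a 0) 1" using k1 by (simp add: pathf_Mid)
    moreover have "pathf b (h + 1) = Mid (cp b 0) 1" using k1 by (simp add: pathf_Mid)
    ultimately show ?thesis using sn cp0 by simp
  qed
  have wb: "t \<ge> h + 1 \<Longrightarrow> w t = pathf b (2 * h + 2 - t)" for t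
    unfolding w_def using mideq by (cases "t = h + 1") auto
  have ph: "h + 1 \<le> phi" "2 * h + 2 \<le> Suc phi" unfolding phi_def using k1 by auto
  have levw: "t \<le> 2 * h + 2 \<Longrightarrow> lev (w t) = (if t \<le> h + 1 then t else 2 * h + 2 - t)" for t
    unfolding w_def using lev_pathf ph by auto
  show ?thesis
  proof (rule extract_cycle[where w = w])
    show "\<And>e. e \<in> EG \<Longrightarrow> \<exists>u v. u \<noteq> v \<and> e = {u, v}"
      using simple_VG unfolding simple_graph_def by blast
    show "1 \<le> 2 * h + 2" by simp
    show "w 0 = w (2 * h + 2)" unfolding w_def pathf_def by simp
    show "w j \<in> VG" if "j \<le> 2 * h + 2" for j
      unfolding w_def using that ph VG_I[OF a] VG_I[OF b] by auto
    show "{w j, w (Suc j)} \<in> EG" if j: "j < 2 * h + 2" for j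
    proof (cases "j < h + 1")
      case True
      then have "w j = pathf a j" "w (Suc j) = pathf a (Suc j)" unfolding w_def by auto
      then show ?thesis using EG_I[OF a, of j] True ph by simp
    next
      case False
      define l where "l = 2 * h + 1 - j"
      have e1: "2 * h + 2 - j = Suc l" "2 * h + 2 - Suc j = l" using False j unfolding l_def by auto
      have "w j = pathf b (Suc l)" using wb[of j] False e1 by simp
      moreover have "w (Suc j) = pathf b l" using wb[of "Suc j"] False e1 by simp
      moreover have "{pathf b l, pathf b (Suc l)} \<in> EG" using EG_I[OF b, of l] False unfolding l_def phi_def by simp
      ultimately show ?thesis by (simp add: insert_commute)
    qed
    show "w (j - 1) \<noteq> w (Suc j)" if j: "0 < j" "j < 2 * h + 2" for j
    proof (cases "j = h + 1")
      case True
      have "w (j - 1) = pathf a h" "w (Suc j) = pathf b h" using True wb unfolding w_def by auto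
      moreover have "pathf a h = Bot a h" "pathf b h = Bot b h" using h1 by (auto intro: pathf_Bot)
      ultimately show ?thesis using ab by simp
    next
      case False
      have "lev (w (j - 1)) \<noteq> lev (w (Suc j))" using levw j False by auto
      then show ?thesis by metis
    qed
  qed
qed

lemma card_VG_upper: "card VG \<le> 2 + 2 * h * card Pidx + k * n"
proof -
  let ?B = "(\<lambda>(a, j). Bot a j) ` (Pidx \<times> {1..h})"
  let ?T = "(\<lambda>(a, j). Top a j) ` (Pidx \<times> {1..h})"
  let ?M = "(\<lambda>(x, r). Mid x r) ` ({..<n} \<times> {1..k})"
  have sub: "VG \<subseteq> {S, T} \<union> ?B \<union> ?T \<union> ?M"
  proof
    fix v assume "v \<in> VG"
    then obtain a j where aj: "a \<in> Pidx" "j \<le> phi" "v = pathf a j" by (rule VG_E)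
    consider "j = 0" | "1 \<le> j" "j \<le> h" | "h < j" "j \<le> h + k" | "h + k < j" "j \<le> 2 * h + k" | "j = phi"
      using aj(2) unfolding phi_def by linarith
    then show "v \<in> {S, T} \<union> ?B \<union> ?T \<union> ?M"
    proof cases
      case 1 then show ?thesis using aj unfolding pathf_def by simp
    next
      case 2
      then have "v = Bot a j" using aj(3) by (simp add: pathf_Bot)
      then show ?thesis using 2 aj(1) by auto
    next
      case 3
      then have "v = Mid (cp a (j - h - 1)) (j - h)" using aj(3) by (simp add: pathf_Mid)
      moreover have "cp a (j - h - 1) \<in> {..<n}" using cp_X[OF aj(1)] 3 by simp
      ultimately show ?thesis using 3 by force
    next
      case 4
      then have "v = Top a (j - h - k)" using aj(3) by (simp add: pathf_Top)
      then show ?thesis using 4 aj(1) by force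
    next
      case 5 then show ?thesis using aj unfolding pathf_def phi_def by simp
    qed
  qed
  have fin: "finite ({S, T} \<union> ?B \<union> ?T \<union> ?M)" using Pidx_fin by simp
  have "card VG \<le> card ({S, T} \<union> ?B \<union> ?T \<union> ?M)" by (rule card_mono[OF fin sub])
  also have "\<dots> \<le> card ({S, T} \<union> ?B \<union> ?T) + card ?M" by (rule card_Un_le)
  also have "\<dots> \<le> card ({S, T} \<union> ?B) + card ?T + card ?M" using card_Un_le by (metis add_le_mono1)
  also have "\<dots> \<le> card {S, T} + card ?B + card ?T + card ?M" using card_Un_le by (metis add_le_mono1)
  also have "\<dots> \<le> 2 + h * card Pidx + h * card Pidx + k * n"
  proof -
    have "card {S, T} \<le> 2" by (simp add: card_insert_le_m1)
    moreover have "card ?B \<le> h * card Pidx" using card_image_le[of "Pidx \<times> {1..h}"] Pidx_fin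
      by (metis card_atLeastAtMost card_cartesian_product diff_Suc_1 finite_SigmaI finite_atLeastAtMost mult.commute)
    moreover have "card ?T \<le> h * card Pidx" using card_image_le[of "Pidx \<times> {1..h}"] Pidx_fin
      by (metis card_atLeastAtMost card_cartesian_product diff_Suc_1 finite_SigmaI finite_atLeastAtMost mult.commute)
    moreover have "card ?M \<le> k * n" using card_image_le[of "{..<n} \<times> {1..k}"]
      by (metis card_atLeastAtMost card_cartesian_product card_lessThan diff_Suc_1 finite_SigmaI finite_atLeastAtMost finite_lessThan mult.commute)
    ultimately show ?thesis by linarith
  qed
  finally show ?thesis by simp
qed

lemma card_VG_lower: "2 * h * card Pidx \<le> card VG"
proof -
  let ?B = "(\<lambda>(a, j). Bot a j) ` (Pidx \<times> {1..h})"
  let ?T = "(\<lambda>(a, j). Top a j) ` (Pidx \<times> {1..h})"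
  have sub: "?B \<union> ?T \<subseteq> VG"
  proof
    fix v assume "v \<in> ?B \<union> ?T"
    then consider a j where "a \<in> Pidx" "1 \<le> j" "j \<le> h" "v = Bot a j"
      | a j where "a \<in> Pidx" "1 \<le> j" "j \<le> h" "v = Top a j" by auto
    then show "v \<in> VG"
    proof cases
      case 1
      then have "v = pathf a j" by (simp add: pathf_Bot)
      then show ?thesis using 1 VG_I[of a j] unfolding phi_def by simp
    next
      case 2
      have "pathf a (h + k + j) = Top a j" using 2 pathf_Top[of "h + k + j" a] by simp
      then show ?thesis using 2 VG_I[of a "h + k + j"] unfolding phi_def by simp
    qed
  qed
  have fin: "finite VG" using simple_VG unfolding simple_graph_def by simp
  have "card ?B = h * card Pidx"
    by (subst card_image) (auto simp: inj_on_def card_cartesian_product)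
  moreover have "card ?T = h * card Pidx"
    by (subst card_image) (auto simp: inj_on_def card_cartesian_product)
  moreover have "card (?B \<union> ?T) = card ?B + card ?T"
    by (rule card_Un_disjoint) (use Pidx_fin in auto)
  ultimately have "card (?B \<union> ?T) = 2 * h * card Pidx" by simp
  then show ?thesis using card_mono[OF fin sub] by simp
qed

lemma girth_VG:
  assumes "n < card Pidx"
  shows "\<exists>g. girth VG EG = enat g \<and> 2 * h + 1 \<le> g \<and> g \<le> 2 * h + 2"
proof -
  have "\<not> inj_on snd Pidx"
  proof
    assume "inj_on snd Pidx"
    then have "card (snd ` Pidx) = card Pidx" by (rule card_image)
    moreover have "snd ` Pidx \<subseteq> {..<n}" unfolding Pidx_def Sset_def by auto
    then have "card (snd ` Pidx) \<le> n" by (metis card_lessThan card_mono finite_lessThan)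
    ultimately show False using assms by simp
  qed
  then obtain a b where ab: "a \<in> Pidx" "b \<in> Pidx" "a \<noteq> b" "snd a = snd b"
    unfolding inj_on_def by blast
  obtain c1 where c1: "is_cycle VG EG c1" "length c1 \<le> 2 * h + 2" using short_cycle[OF ab] by blast
  obtain c0 where c0: "is_cycle VG EG c0" "girth VG EG = enat (length c0)"
    "\<forall>c. is_cycle VG EG c \<longrightarrow> length c0 \<le> length c"
    using girth_attained[OF c1(1)] by blast
  show ?thesis using c0 c1 cycle_long[OF c0(1)] by (intro exI[of _ "length c0"]) force
qed

end


lemma pow_ge_lin: fixes a h :: nat assumes "2 \<le> a" "1 \<le> h" shows "a * h \<le> a ^ h"
  using assms(2)
proof (induction h)
  case 0 then show ?case by simp
next
  case (Suc h)
  show ?case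
  proof (cases "h = 0")
    case True then show ?thesis by simp
  next
    case False
    then have "a * h \<le> a ^ h" using Suc by simp
    then have "a * (a * h) \<le> a * a ^ h" by simp
    moreover have "a * Suc h \<le> a * (a * h)"
    proof -
      have "a \<le> a * h" using False by simp
      then have "a * Suc h \<le> 2 * (a * h)" by simp
      also have "\<dots> \<le> a * (a * h)" using assms(1) by (rule mult_le_mono1)
      finally show ?thesis .
    qed
    moreover have "a * (a * h) \<le> a * a ^ h" using \<open>a * h \<le> a ^ h\<close> by (rule mult_le_mono2)
    ultimately have "a * Suc h \<le> a * a ^ h" using le_trans by blast
    then show ?thesis by simp
  qed
qed

lemma core:
  assumes h1: "1 \<le> h"
  shows "\<exists>m E g. 625 ^ h \<le> m \<and> m \<le> 450000 ^ h \<and>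
     (\<exists>s t. base_graph {..<m} E s t (10 * h + 3)) \<and>
     3 * m \<le> card E \<and> card E \<le> 7 * m \<and>
     girth {..<m} E = enat g \<and> 2 * h + 1 \<le> g \<and> g \<le> 2 * h + 2"
proof -
  define k where "k = 8 * h + 2"
  define n where "n = (16 * h + 4) * 625 ^ h"
  define \<beta> :: nat where "\<beta> = 25 ^ (2 * h - 1)"
  have g3: "3 \<le> 2 * h + 1" using h1 by simp
  obtain A where gA: "good n 12 (2 * h + 1) A"
    and dA: "\<forall>i<12. card ({..<n} - domi A i) \<le> (2 * 12 + 1) ^ (2 * h + 1 - 2)"
    using greedy[OF g3, of n 12] by blast
  have dA': "\<And>i. i < 12 \<Longrightarrow> card ({..<n} - domi A i) \<le> \<beta>"
    using dA unfolding \<beta>_def by (simp add: numeral_eq_Suc)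
  interpret C: constr n 12 h k A
    by unfold_locales (use gA h1 in \<open>auto simp: k_def\<close>)
  have b625: "\<beta> \<le> 625 ^ h"
  proof -
    have "\<beta> \<le> 25 ^ (2 * h)" unfolding \<beta>_def by (rule power_increasing) auto
    also have "\<dots> = 625 ^ h" by (simp add: power_mult)
    finally show ?thesis .
  qed
  have nS: "n \<le> 2 * card (Sset n A i (k - 1))" if i: "i < 12" for i
  proof -
    have "card ({..<n} - Sset n A i (k - 1)) \<le> (k - 1) * \<beta>"
      by (rule Sset_card[OF gA dA'[OF i]])
    also have "\<dots> \<le> (8 * h + 1) * 625 ^ h"
    proof -
      have "k - 1 = 8 * h + 1" unfolding k_def by simp
      then show ?thesis using mult_le_mono2[OF b625, of "8 * h + 1"] by simp
    qed
    finally have c1: "card ({..<n} - Sset n A i (k - 1)) \<le> (8 * h + 1) * 625 ^ h" .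
    have sub: "Sset n A i (k - 1) \<subseteq> {..<n}" unfolding Sset_def by auto
    have "card ({..<n} - Sset n A i (k - 1)) = n - card (Sset n A i (k - 1))"
      using sub by (simp add: card_Diff_subset finite_subset)
    then have "n - card (Sset n A i (k - 1)) \<le> (8 * h + 1) * 625 ^ h" using c1 by simp
    moreover have "2 * ((8 * h + 1) * 625 ^ h) \<le> n" unfolding n_def by (simp add: algebra_simps)
    ultimately show ?thesis by linarith
  qed
  define N where "N = card C.Pidx"
  have PidxS: "C.Pidx = Sigma {..<12} (\<lambda>i. Sset n A i (k - 1))" unfolding C.Pidx_def by auto
  have cardN: "N = (\<Sum>i<12. card (Sset n A i (k - 1)))"
    unfolding N_def PidxS by (rule card_SigmaI) (auto simp: Sset_def)
  have "12 * n \<le> 2 * N"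
  proof -
    have "(\<Sum>i<(12::nat). n) \<le> (\<Sum>i<12. 2 * card (Sset n A i (k - 1)))"
      by (rule sum_mono) (use nS in auto)
    then show ?thesis unfolding cardN by (simp add: sum_distrib_left)
  qed
  then have N6: "6 * n \<le> N" by simp
  have n1: "1 \<le> n" unfolding n_def by simp
  have Nn: "n < N" using N6 n1 by simp
  have Pne: "C.Pidx \<noteq> {}" using Nn unfolding N_def by auto
  have N12: "N \<le> 12 * n"
  proof -
    have "C.Pidx \<subseteq> {..<12} \<times> {..<n}" unfolding C.Pidx_def Sset_def by auto
    then have "N \<le> card ({..<12::nat} \<times> {..<n})" unfolding N_def by (intro card_mono) auto
    then show ?thesis by (simp add: card_cartesian_product)
  qed
  have phi: "C.phi = 10 * h + 3" using C.phi_def unfolding k_def by simp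
  define m where "m = card C.VG"
  have mlo: "2 * h * N \<le> m" unfolding m_def N_def by (rule C.card_VG_lower)
  have mhi: "m \<le> 2 + 2 * h * N + k * n" unfolding m_def N_def by (rule C.card_VG_upper)
  have cE: "card C.EG = N * (10 * h + 3)" using C.card_EG phi unfolding N_def by simp
  obtain f where f: "bij_betw f C.VG {0..<m}"
    using ex_bij_betw_finite_nat[of C.VG] C.simple_VG unfolding simple_graph_def m_def by blast
  have inj: "inj_on f C.VG" and fV: "f ` C.VG = {..<m}" using f unfolding bij_betw_def
    by (auto simp: atLeast0LessThan)
  have EP: "C.EG \<subseteq> Pow C.VG" by (rule simple_graph_Pow[OF C.simple_VG])
  define E where "E = emap f C.EG"
  have bg: "base_graph {..<m} E (f S) (f T) (10 * h + 3)"
    using base_map[OF inj C.base_VG[OF Pne]] unfolding E_def fV phi .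
  have cardE: "card E = N * (10 * h + 3)" unfolding E_def using card_emap[OF inj EP] cE by simp
  obtain g where g: "girth C.VG C.EG = enat g" "2 * h + 1 \<le> g" "g \<le> 2 * h + 2"
    using C.girth_VG Nn unfolding N_def by blast
  have gE: "girth {..<m} E = enat g" unfolding E_def using girth_map[OF inj EP] g(1) fV by simp
  have hN: "N \<le> h * N" using h1 by simp
  have a1: "3 * m \<le> card E"
  proof -
    have "3 * (k * n) = (4 * h + 1) * (6 * n)" unfolding k_def by (simp add: algebra_simps)
    also have "\<dots> \<le> (4 * h + 1) * N" using N6 by (rule mult_le_mono2)
    finally have "3 * (k * n) \<le> 4 * (h * N) + N" by (simp add: algebra_simps)
    moreover have "6 \<le> 2 * N" using Nn n1 N6 by simp
    moreover have "card E = 10 * (h * N) + 3 * N" unfolding cardE by (simp add: algebra_simps)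
    moreover have "m \<le> 2 + 2 * (h * N) + k * n" using mhi by (simp add: algebra_simps)
    ultimately show ?thesis by linarith
  qed
  have a2: "card E \<le> 7 * m"
  proof -
    have "3 * N \<le> 4 * (h * N)" using hN by linarith
    moreover have "card E = 10 * (h * N) + 3 * N" unfolding cardE by (simp add: algebra_simps)
    moreover have "2 * (h * N) \<le> m" using mlo by (simp add: algebra_simps)
    ultimately show ?thesis by linarith
  qed
  have a3: "625 ^ h \<le> m"
  proof -
    have "625 ^ h \<le> n" unfolding n_def by simp
    also have "\<dots> \<le> N" using N6 by simp
    also have "\<dots> \<le> 2 * h * N" using hN by simp
    finally show ?thesis using mlo by simp
  qed
  have a4: "m \<le> 450000 ^ h"
  proof -
    have "m \<le> 2 + 2 * h * (12 * n) + k * n"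
      using mhi N12 by (meson add_le_mono add_le_mono1 le_trans mult_le_mono2 order_refl)
    also have "\<dots> \<le> (32 * h + 4) * n" unfolding k_def using n1 by (simp add: algebra_simps)
    also have "\<dots> = (32 * h + 4) * (16 * h + 4) * 625 ^ h" unfolding n_def by simp
    also have "\<dots> \<le> 36 ^ h * 20 ^ h * 625 ^ h"
    proof -
      have "32 * h + 4 \<le> 36 * h" using h1 by simp
      also have "\<dots> \<le> 36 ^ h" by (rule pow_ge_lin) (use h1 in auto)
      finally have x: "32 * h + 4 \<le> (36::nat) ^ h" .
      have "16 * h + 4 \<le> 20 * h" using h1 by simp
      also have "\<dots> \<le> 20 ^ h" by (rule pow_ge_lin) (use h1 in auto)
      finally have y: "16 * h + 4 \<le> (20::nat) ^ h" .
      show ?thesis using mult_le_mono[OF x y] by simp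
    qed
    also have "\<dots> = 450000 ^ h" by (simp add: power_mult_distrib[symmetric])
    finally show ?thesis .
  qed
  show ?thesis
    by (rule exI[of _ m], rule exI[of _ E], rule exI[of _ g]) (use bg a1 a2 a3 a4 gE g in blast)
qed

lemma ln_bounds:
  fixes m h :: nat
  assumes h1: "1 \<le> h" and lo: "625 ^ h \<le> m" and hi: "m \<le> 450000 ^ h"
  shows "2 * real h \<le> ln (real m)" and "ln (real m) \<le> 450000 * real h"
proof -
  have mpos: "0 < real m" using lo by (metis of_nat_0_less_iff le_less_trans less_le_trans zero_less_numeral zero_less_power)
  have "ln (625 ^ h) \<le> ln (real m)" using lo mpos
    by (subst ln_le_cancel_iff) (auto simp del: of_nat_power simp add: of_nat_power[symmetric])
  moreover have "ln ((625::real) ^ h) = real h * ln 625" by (rule ln_realpow)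
  moreover have "2 \<le> ln (625::real)"
  proof -
    have "exp 2 = exp 1 * exp (1::real)" by (simp add: exp_add[symmetric])
    also have "\<dots> \<le> 3 * 3" using exp_le by (intro mult_mono) auto
    finally have "exp 2 \<le> (625::real)" by simp
    then show ?thesis by (subst ln_ge_iff) auto
  qed
  ultimately show "2 * real h \<le> ln (real m)"
    by (metis mult.commute mult_right_mono of_nat_0_le_iff order_trans)
  have "ln (real m) \<le> ln (450000 ^ h)" using hi mpos
    by (subst ln_le_cancel_iff) (auto simp del: of_nat_power simp add: of_nat_power[symmetric])
  also have "\<dots> = real h * ln 450000" by (rule ln_realpow)
  also have "\<dots> \<le> real h * 450000"
  proof -
    have "ln (450000::real) < 450000" by (rule ln_less_self) simp
    then have "ln (450000::real) \<le> 450000" by (rule less_imp_le)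
    then show ?thesis by (intro mult_left_mono) auto
  qed
  finally show "ln (real m) \<le> 450000 * real h" by simp
qed

theorem lemma5p4:
  shows "\<exists>c::real. c > 0 \<and> (\<exists>C::real. C > 0 \<and>
    (\<exists>M::nat set. infinite M \<and>
      (\<exists>B :: nat \<Rightarrow> nat set set. \<forall>m\<in>M.
         (\<exists>s t phi. base_graph {..<m} (B m) s t phi \<and>
            c * ln (real m) \<le> real phi \<and> real phi \<le> C * ln (real m)) \<and>
         real (card (B m)) \<le> C * real m \<and>
         card (B m) \<ge> 3 * m \<and>
         (\<exists>g::nat. girth {..<m} (B m) = enat g \<and>
            c * ln (real m) \<le> real g \<and> real g \<le> C * ln (real m)))))"
proof -
  define c :: real where "c = 1 / 450000"
  define C :: real where "C = 10"
  define P where "P = (\<lambda>m (E :: nat set set).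
         (\<exists>s t phi. base_graph {..<m} E s t phi \<and>
            c * ln (real m) \<le> real phi \<and> real phi \<le> C * ln (real m)) \<and>
         real (card E) \<le> C * real m \<and>
         card E \<ge> 3 * m \<and>
         (\<exists>g::nat. girth {..<m} E = enat g \<and>
            c * ln (real m) \<le> real g \<and> real g \<le> C * ln (real m)))"
  have step: "\<exists>m E. h \<le> m \<and> P m E" if h1: "1 \<le> h" for h
  proof -
    obtain m E g where mE: "625 ^ h \<le> m" "m \<le> 450000 ^ h"
      "\<exists>s t. base_graph {..<m} E s t (10 * h + 3)"
      "3 * m \<le> card E" "card E \<le> 7 * m"
      "girth {..<m} E = enat g" "2 * h + 1 \<le> g" "g \<le> 2 * h + 2"
      using core[OF h1] by blast
    have l1: "2 * real h \<le> ln (real m)" and l2: "ln (real m) \<le> 450000 * real h"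
      using ln_bounds[OF h1 mE(1,2)] by auto
    have cl: "c * ln (real m) \<le> real h" using l2 unfolding c_def by simp
    have hr: "1 \<le> real h" using h1 by simp
    have "h \<le> 625 ^ h" by (rule order_trans[OF _ pow_ge_lin[of 625 h]]) (use h1 in auto)
    then have hm: "h \<le> m" using mE(1) by (rule le_trans)
    have "P m E" unfolding P_def
    proof (intro conjI)
      obtain s t where st: "base_graph {..<m} E s t (10 * h + 3)" using mE(3) by blast
      show "\<exists>s t phi. base_graph {..<m} E s t phi \<and> c * ln (real m) \<le> real phi \<and> real phi \<le> C * ln (real m)"
      proof (intro exI conjI)
        show "base_graph {..<m} E s t (10 * h + 3)" by (rule st)
        show "c * ln (real m) \<le> real (10 * h + 3)" using cl by simp
        show "real (10 * h + 3) \<le> C * ln (real m)" using l1 hr unfolding C_def by simp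
      qed
      have "real (card E) \<le> real (7 * m)" using mE(5) by (simp only: of_nat_le_iff)
      then show "real (card E) \<le> C * real m" unfolding C_def by simp
      show "3 * m \<le> card E" by (rule mE(4))
      show "\<exists>g. girth {..<m} E = enat g \<and> c * ln (real m) \<le> real g \<and> real g \<le> C * ln (real m)"
      proof (intro exI conjI)
        show "girth {..<m} E = enat g" by (rule mE(6))
        show "c * ln (real m) \<le> real g" using cl mE(7) by simp
        show "real g \<le> C * ln (real m)" using mE(8) l1 hr unfolding C_def by simp
      qed
    qed
    then show ?thesis using hm by blast
  qed
  obtain mf Ef where mf: "\<And>h. 1 \<le> h \<Longrightarrow> h \<le> mf h \<and> P (mf h) (Ef h)"
    using step by metis
  define M where "M = mf ` {1..}"
  have infM: "infinite M"
  proof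
    assume "finite M"
    then obtain b where b: "\<And>x. x \<in> M \<Longrightarrow> x \<le> b" by (meson finite_nat_set_iff_bounded_le)
    have "Suc b \<le> mf (Suc b)" using mf[of "Suc b"] by simp
    moreover have "mf (Suc b) \<in> M" unfolding M_def by simp
    ultimately show False using b by fastforce
  qed
  have "\<forall>m\<in>M. \<exists>E. P m E" unfolding M_def using mf by auto
  then obtain B where B: "\<forall>m\<in>M. P m (B m)" by metis
  show ?thesis
    by (rule exI[of _ c], rule conjI, simp add: c_def, rule exI[of _ C], rule conjI, simp add: C_def,
        rule exI[of _ M], rule conjI, rule infM, rule exI[of _ B]) (use B in \<open>simp add: P_def\<close>)
qed


end
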